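(* Let $Q$ be a quiver and let $A,B,C\in\mathbb{C}\bar Q$ represent elements of $\mathcal{V}^rQ$, $\mathcal{V}^sQ$ and $\mathcal{V}^tQ$ respectively. Then the Schouten bracket $[\,,\,]_{\mathcal V}$ on $\mathcal{V}Q$ satisfies: (i) $[A,B]_{\mathcal V}=-(-1)^{(r-1)(s-1)}[B,A]_{\mathcal V}$; (ii) $(-1)^{(r-1)(t-1)}[A,[B,C]_{\mathcal V}]_{\mathcal V}+(-1)^{(s-1)(r-1)}[B,[C,A]_{\mathcal V}]_{\mathcal V}+(-1)^{(t-1)(s-1)}[C,[A,B]_{\mathcal V}]_{\mathcal V}=0.$
   Context: A quiver $Q$ has a finite vertex set $I=\{1,\dots,k\}$ and a finite set of arrows (also denoted $Q$) with head and tail maps $h,t:Q\to I$. The path algebra $\mathbb{C}Q$ has as basis the paths in $Q$ (including a trivial path $e_i$ at each vertex $i$), multiplication being concatenation written from right to left (a product $xy$ of arrows is nonzero iff $t(x)=h(y)$; $e_{h(a)}a=a=ae_{t(a)}$). The double quiver $\bar Q$ has arrows $Q\cup\{a^*:a\in Q\}$ with $h(a^* )=t(a)$, $t(a^* )=h(a)$. Let $\mathbb{C}\bar Q^r\subset\mathbb{C}\bar Q$ be the span of paths containing exactly $r$ starred arrows. Let $\mathcal{V}Q$ be the quotient of $\mathbb{C}\bar Q$ by the linear span of all $PR-(-1)^{pr}RP$ with $P\in\mathbb{C}\bar Q^p$, $R\in\mathbb{C}\bar Q^r$; it is graded, $\mathcal{V}Q=\bigoplus_r\mathcal{V}^rQ$.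 For $w\in\bar Q$ and a path $x_1\cdots x_n$ ($x_i\in\bar Q$) set $D_w(x_1\cdots x_n)=\sum_{i:\,x_i=w}(-1)^{\lambda_i\mu_i}x_{i+1}\cdots x_nx_1\cdots x_{i-1}$, where $\lambda_i$ (resp. $\mu_i$) is the number of starred arrows among $x_{i+1},\dots,x_n$ (resp. among $x_1,\dots,x_i$), extended linearly. For $\gamma\in\mathcal{V}^rQ$, $\delta\in\mathcal{V}^sQ$ the Schouten bracket is $[\gamma,\delta]_{\mathcal V}=\sum_{a\in Q}\big(D_{a^*}(\gamma)D_a(\delta)-(-1)^{(r-1)(s-1)}D_{a^*}(\delta)D_a(\gamma)\big)$, taken modulo the relations defining $\mathcal{V}Q$. *)

theory Defs
  imports Complex_Main
begin

text \<open>Arrows of the double quiver: an original arrow a or a starred arrow a*.\<close>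
datatype 'a darrow = Orig 'a | Star 'a

text \<open>Paths: a trivial path e_i at a vertex, or a nonempty word x_1 ... x_n of
  double-quiver arrows (composition right to left: t(x_k) = h(x_(k+1))).\<close>
datatype ('v,'a) qpath = Triv 'v | Arr "'a darrow list"

fun dh :: "('a \<Rightarrow> 'v) \<Rightarrow> ('a \<Rightarrow> 'v) \<Rightarrow> 'a darrow \<Rightarrow> 'v" where
  "dh hh tt (Orig a) = hh a"
| "dh hh tt (Star a) = tt a"

fun dt :: "('a \<Rightarrow> 'v) \<Rightarrow> ('a \<Rightarrow> 'v) \<Rightarrow> 'a darrow \<Rightarrow> 'v" where
  "dt hh tt (Orig a) = tt a"
| "dt hh tt (Star a) = hh a"

fun base_arrow :: "'a darrow \<Rightarrow> 'a" where
  "base_arrow (Orig a) = a"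
| "base_arrow (Star a) = a"

fun is_star :: "'a darrow \<Rightarrow> bool" where
  "is_star (Orig a) = False"
| "is_star (Star a) = True"

definition nstars :: "'a darrow list \<Rightarrow> nat" where
  "nstars xs = length (filter is_star xs)"

fun path_stars :: "('v,'a) qpath \<Rightarrow> nat" where
  "path_stars (Triv i) = 0"
| "path_stars (Arr xs) = nstars xs"

fun valid_path :: "'v set \<Rightarrow> 'a set \<Rightarrow> ('a \<Rightarrow> 'v) \<Rightarrow> ('a \<Rightarrow> 'v) \<Rightarrow> ('v,'a) qpath \<Rightarrow> bool" where
  "valid_path I Q hh tt (Triv i) = (i \<in> I)"
| "valid_path I Q hh tt (Arr xs) = (xs \<noteq> [] \<and> (\<forall>x\<in>set xs. base_arrow x \<in> Q) \<and>
      (\<forall>k. Suc k < length xs \<longrightarrow> dt hh tt (xs ! k) = dh hh tt (xs ! Suc k)))"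

text \<open>Product of two paths p q (p to the left); None means the product is zero.\<close>
fun pmul :: "('a \<Rightarrow> 'v) \<Rightarrow> ('a \<Rightarrow> 'v) \<Rightarrow> ('v,'a) qpath \<Rightarrow> ('v,'a) qpath \<Rightarrow> ('v,'a) qpath option" where
  "pmul hh tt (Triv i) (Triv j) = (if i = j then Some (Triv i) else None)"
| "pmul hh tt (Triv i) (Arr ys) = (if i = dh hh tt (hd ys) then Some (Arr ys) else None)"
| "pmul hh tt (Arr xs) (Triv j) = (if dt hh tt (last xs) = j then Some (Arr xs) else None)"
| "pmul hh tt (Arr xs) (Arr ys) = (if dt hh tt (last xs) = dh hh tt (hd ys) then Some (Arr (xs @ ys)) else None)"

text \<open>Elements of the path algebra C Qbar: finitely supported coefficient functions on paths.\<close>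
type_synonym ('v,'a) elt = "('v,'a) qpath \<Rightarrow> complex"

definition in_CQ :: "'v set \<Rightarrow> 'a set \<Rightarrow> ('a \<Rightarrow> 'v) \<Rightarrow> ('a \<Rightarrow> 'v) \<Rightarrow> ('v,'a) elt \<Rightarrow> bool" where
  "in_CQ I Q hh tt f \<longleftrightarrow> finite {p. f p \<noteq> 0} \<and> (\<forall>p. f p \<noteq> 0 \<longrightarrow> valid_path I Q hh tt p)"

text \<open>The graded piece C Qbar^r: spanned by paths with exactly r starred arrows.\<close>
definition graded :: "'v set \<Rightarrow> 'a set \<Rightarrow> ('a \<Rightarrow> 'v) \<Rightarrow> ('a \<Rightarrow> 'v) \<Rightarrow> nat \<Rightarrow> ('v,'a) elt set" where
  "graded I Q hh tt r = {f. in_CQ I Q hh tt f \<and> (\<forall>p. f p \<noteq> 0 \<longrightarrow> path_stars p = r)}"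

definition basis :: "('v,'a) qpath \<Rightarrow> ('v,'a) elt" where
  "basis p = (\<lambda>q. if q = p then 1 else 0)"

definition emul :: "('a \<Rightarrow> 'v) \<Rightarrow> ('a \<Rightarrow> 'v) \<Rightarrow> ('v,'a) elt \<Rightarrow> ('v,'a) elt \<Rightarrow> ('v,'a) elt" where
  "emul hh tt f g = (\<lambda>p. \<Sum>(p1,p2) \<in> {(p1,p2). f p1 \<noteq> 0 \<and> g p2 \<noteq> 0 \<and> pmul hh tt p1 p2 = Some p}.
                         f p1 * g p2)"

definition sgnc :: "int \<Rightarrow> complex" where
  "sgnc e = (if even e then 1 else -1)"

definition word :: "'v \<Rightarrow> 'a darrow list \<Rightarrow> ('v,'a) elt" where
  "word v ys = (if ys = [] then basis (Triv v) else basis (Arr ys))"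

text \<open>D_w on a single path x_1...x_n: sum over i with x_i = w of
  (-1)^(lambda_i mu_i) x_(i+1)...x_n x_1...x_(i-1), where the (possibly empty) subwords
  x_(i+1)...x_n and x_1...x_(i-1) are the elements e_(t(x_i)) resp. e_(h(x_i)) when empty,
  and the product is taken in C Qbar (zero if not composable).\<close>
fun Dpath :: "('a \<Rightarrow> 'v) \<Rightarrow> ('a \<Rightarrow> 'v) \<Rightarrow> 'a darrow \<Rightarrow> ('v,'a) qpath \<Rightarrow> ('v,'a) elt" where
  "Dpath hh tt w (Triv i) = (\<lambda>q. 0)"
| "Dpath hh tt w (Arr xs) = (\<lambda>q. \<Sum>i<length xs. if xs ! i = w then
      sgnc (int (nstars (drop (Suc i) xs)) * int (nstars (take (Suc i) xs))) *
      emul hh tt (word (dt hh tt w) (drop (Suc i) xs)) (word (dh hh tt w) (take i xs)) q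
    else 0)"

definition Dw :: "('a \<Rightarrow> 'v) \<Rightarrow> ('a \<Rightarrow> 'v) \<Rightarrow> 'a darrow \<Rightarrow> ('v,'a) elt \<Rightarrow> ('v,'a) elt" where
  "Dw hh tt w f = (\<lambda>q. \<Sum>p \<in> {p. f p \<noteq> 0}. f p * Dpath hh tt w p q)"

definition schouten :: "'a set \<Rightarrow> ('a \<Rightarrow> 'v) \<Rightarrow> ('a \<Rightarrow> 'v) \<Rightarrow> int \<Rightarrow> int \<Rightarrow> ('v,'a) elt \<Rightarrow> ('v,'a) elt \<Rightarrow> ('v,'a) elt" where
  "schouten Q hh tt r s \<gamma> \<delta> = (\<lambda>q. \<Sum>a\<in>Q.
      emul hh tt (Dw hh tt (Star a) \<gamma>) (Dw hh tt (Orig a) \<delta>) q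
      - sgnc ((r - 1) * (s - 1)) * emul hh tt (Dw hh tt (Star a) \<delta>) (Dw hh tt (Orig a) \<gamma>) q)"

text \<open>Generators of the relations defining VQ: PR - (-1)^(pr) RP.\<close>
definition relgens :: "'v set \<Rightarrow> 'a set \<Rightarrow> ('a \<Rightarrow> 'v) \<Rightarrow> ('a \<Rightarrow> 'v) \<Rightarrow> ('v,'a) elt set" where
  "relgens I Q hh tt = {(\<lambda>q. emul hh tt P R q - sgnc (int p * int r) * emul hh tt R P q) | P R p r.
      P \<in> graded I Q hh tt p \<and> R \<in> graded I Q hh tt r}"

text \<open>Their complex linear span; x = y in VQ iff x - y lies in it.\<close>
inductive_set relspan :: "'v set \<Rightarrow> 'a set \<Rightarrow> ('a \<Rightarrow> 'v) \<Rightarrow> ('a \<Rightarrow> 'v) \<Rightarrow> ('v,'a) elt set"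
  for I Q hh tt where
  zero: "(\<lambda>q. 0) \<in> relspan I Q hh tt"
| gen: "x \<in> relgens I Q hh tt \<Longrightarrow> x \<in> relspan I Q hh tt"
| add: "x \<in> relspan I Q hh tt \<Longrightarrow> y \<in> relspan I Q hh tt \<Longrightarrow> (\<lambda>q. x q + y q) \<in> relspan I Q hh tt"
| scale: "x \<in> relspan I Q hh tt \<Longrightarrow> (\<lambda>q. c * x q) \<in> relspan I Q hh tt"

end

theory Submission
  imports Defs "HOL-Library.Function_Algebras"
begin


lemma sum_fun_app: "(sum f S) x = sum (\<lambda>i. f i x) S"
  by (induct S rule: infinite_finite_induct) auto

definition supp :: "('v,'a) elt \<Rightarrow> ('v,'a) qpath set" where
  "supp f = {p. f p \<noteq> 0}"

abbreviation fs :: "('v,'a) elt \<Rightarrow> bool" where "fs f \<equiv> finite (supp f)"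

definition smul :: "complex \<Rightarrow> ('v,'a) elt \<Rightarrow> ('v,'a) elt" where
  "smul c f = (\<lambda>q. c * f q)"

lemma smul_apply[simp]: "smul c f q = c * f q" by (simp add: smul_def)

lemma emul_alt:
  assumes "finite S" "finite T" "supp f \<subseteq> S" "supp g \<subseteq> T"
  shows "emul hh tt f g p = (\<Sum>p1\<in>S. \<Sum>p2\<in>T. if pmul hh tt p1 p2 = Some p then f p1 * g p2 else 0)"
proof -
  let ?P = "{(p1,p2). f p1 \<noteq> 0 \<and> g p2 \<noteq> 0 \<and> pmul hh tt p1 p2 = Some p}"
  have sub: "?P \<subseteq> S \<times> T" using assms(3,4) by (auto simp: supp_def)
  have "(\<Sum>p1\<in>S. \<Sum>p2\<in>T. if pmul hh tt p1 p2 = Some p then f p1 * g p2 else 0)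
      = (\<Sum>(p1,p2)\<in>S\<times>T. if pmul hh tt p1 p2 = Some p then f p1 * g p2 else 0)"
    by (simp add: sum.cartesian_product)
  also have "\<dots> = (\<Sum>(p1,p2)\<in>?P. if pmul hh tt p1 p2 = Some p then f p1 * g p2 else 0)"
    by (rule sum.mono_neutral_right) (use sub assms(1,2) in \<open>auto split: if_splits\<close>)
  also have "\<dots> = (\<Sum>(p1,p2)\<in>?P. f p1 * g p2)"
    by (rule sum.cong) auto
  finally show ?thesis unfolding emul_def by simp
qed

lemma Dw_alt:
  assumes "finite S" "supp f \<subseteq> S"
  shows "Dw hh tt w f q = (\<Sum>p\<in>S. f p * Dpath hh tt w p q)"
  unfolding Dw_def
  by (rule sum.mono_neutral_left) (use assms in \<open>auto simp: supp_def\<close>)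

lemma supp_add: "supp (f + g) \<subseteq> supp f \<union> supp g" by (auto simp: supp_def)
lemma fs_add[simp]: "fs f \<Longrightarrow> fs g \<Longrightarrow> fs (f + g)"
  by (meson finite_UnI rev_finite_subset supp_add)
lemma fs_uminus[simp]: "fs (- f) = fs f" by (simp add: supp_def)
lemma fs_diff[simp]: "fs f \<Longrightarrow> fs g \<Longrightarrow> fs (f - g)"
  by (metis diff_conv_add_uminus fs_add fs_uminus)
lemma fs_smul[simp]: "fs f \<Longrightarrow> fs (smul c f)"
  by (rule rev_finite_subset[of "supp f"]) (auto simp: supp_def)
lemma fs_zero[simp]: "fs 0" by (simp add: supp_def)
lemma fs_sum[simp]: "(\<And>i. i \<in> I \<Longrightarrow> fs (f i)) \<Longrightarrow> fs (sum f I)"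
  by (induct I rule: infinite_finite_induct) auto
lemma fs_basis[simp]: "fs (basis p)"
  by (rule rev_finite_subset[of "{p}"]) (auto simp: supp_def basis_def)

lemma fs_emul[simp]: assumes "fs f" "fs g" shows "fs (emul hh tt f g)"
proof -
  have "supp (emul hh tt f g) \<subseteq> (\<lambda>(p1,p2). the (pmul hh tt p1 p2)) ` (supp f \<times> supp g)"
  proof
    fix p assume "p \<in> supp (emul hh tt f g)"
    hence ne: "emul hh tt f g p \<noteq> 0" by (simp add: supp_def)
    have "{(p1,p2). f p1 \<noteq> 0 \<and> g p2 \<noteq> 0 \<and> pmul hh tt p1 p2 = Some p} \<noteq> {}"
    proof
      assume e: "{(p1,p2). f p1 \<noteq> 0 \<and> g p2 \<noteq> 0 \<and> pmul hh tt p1 p2 = Some p} = {}"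
      have "emul hh tt f g p = 0" by (simp only: emul_def e sum.empty)
      with ne show False by simp
    qed
    then obtain p1 p2 where "f p1 \<noteq> 0" "g p2 \<noteq> 0" "pmul hh tt p1 p2 = Some p" by blast
    thus "p \<in> (\<lambda>(p1,p2). the (pmul hh tt p1 p2)) ` (supp f \<times> supp g)"
      by (force simp: supp_def)
  qed
  thus ?thesis using assms by (meson finite_SigmaI finite_imageI rev_finite_subset)
qed

lemma fs_Dpath[simp]: "fs (Dpath hh tt w p)"
proof (cases p)
  case (Triv x) thus ?thesis by (simp add: supp_def)
next
  case (Arr xs)
  let ?g = "\<lambda>i. smul (if xs ! i = w then sgnc (int (nstars (drop (Suc i) xs)) * int (nstars (take (Suc i) xs))) else 0)
      (emul hh tt (word (dt hh tt w) (drop (Suc i) xs)) (word (dh hh tt w) (take i xs)))"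
  have "Dpath hh tt w p = (\<Sum>i<length xs. ?g i)"
    using Arr by (auto simp: sum_fun_app fun_eq_iff intro!: sum.cong)
  moreover have "fs (\<Sum>i<length xs. ?g i)"
    by (intro fs_sum fs_smul fs_emul) (auto simp: word_def)
  ultimately show ?thesis by simp
qed

lemma fs_Dw[simp]: assumes "fs f" shows "fs (Dw hh tt w f)"
proof -
  have "Dw hh tt w f = (\<Sum>p\<in>supp f. smul (f p) (Dpath hh tt w p))"
    by (auto simp: sum_fun_app fun_eq_iff Dw_def supp_def)
  moreover have "fs (\<Sum>p\<in>supp f. smul (f p) (Dpath hh tt w p))" by simp
  ultimately show ?thesis by simp
qed



lemma supp_smul: "supp (smul c f) \<subseteq> supp f" by (auto simp: supp_def)

definition ind :: "bool \<Rightarrow> complex" where "ind b = (if b then 1 else 0)"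

lemma emul_alt':
  assumes "finite S" "finite T" "supp f \<subseteq> S" "supp g \<subseteq> T"
  shows "emul hh tt f g p = (\<Sum>p1\<in>S. \<Sum>p2\<in>T. ind (pmul hh tt p1 p2 = Some p) * (f p1 * g p2))"
  unfolding emul_alt[OF assms] ind_def by (intro sum.cong refl) simp

lemma emul_add_left: assumes "fs f" "fs g" "fs h"
  shows "emul hh tt (f + g) h = emul hh tt f h + emul hh tt g h"
proof
  fix p
  let ?S = "supp f \<union> supp g"
  have s: "supp (f+g) \<subseteq> ?S" by (rule supp_add)
  show "emul hh tt (f + g) h p = (emul hh tt f h + emul hh tt g h) p"
    using emul_alt'[of ?S "supp h" "f+g" h hh tt p] emul_alt'[of ?S "supp h" f h hh tt p]
      emul_alt'[of ?S "supp h" g h hh tt p] assms s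
    by (simp add: sum.distrib[symmetric] algebra_simps)
qed

lemma emul_add_right: assumes "fs f" "fs g" "fs h"
  shows "emul hh tt h (f + g) = emul hh tt h f + emul hh tt h g"
proof
  fix p
  let ?S = "supp f \<union> supp g"
  have s: "supp (f+g) \<subseteq> ?S" by (rule supp_add)
  show "emul hh tt h (f + g) p = (emul hh tt h f + emul hh tt h g) p"
    using emul_alt'[of "supp h" ?S h "f+g" hh tt p] emul_alt'[of "supp h" ?S h f hh tt p]
      emul_alt'[of "supp h" ?S h g hh tt p] assms s
    by (simp add: sum.distrib[symmetric] algebra_simps)
qed

lemma emul_smul_left: assumes "fs f" "fs h"
  shows "emul hh tt (smul c f) h = smul c (emul hh tt f h)"
proof
  fix p
  show "emul hh tt (smul c f) h p = smul c (emul hh tt f h) p"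
    using emul_alt'[of "supp f" "supp h" "smul c f" h hh tt p] emul_alt'[of "supp f" "supp h" f h hh tt p]
      assms supp_smul[of c f]
    by (simp add: sum_distrib_left algebra_simps)
qed

lemma emul_smul_right: assumes "fs f" "fs h"
  shows "emul hh tt h (smul c f) = smul c (emul hh tt h f)"
proof
  fix p
  show "emul hh tt h (smul c f) p = smul c (emul hh tt h f) p"
    using emul_alt'[of "supp h" "supp f" h "smul c f" hh tt p] emul_alt'[of "supp h" "supp f" h f hh tt p]
      assms supp_smul[of c f]
    by (simp add: sum_distrib_left algebra_simps)
qed

lemma emul_zero_left[simp]: "emul hh tt 0 h = 0"
  by (simp add: emul_def fun_eq_iff)
lemma emul_zero_right[simp]: "emul hh tt h 0 = 0"
  by (simp add: emul_def fun_eq_iff)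

lemma emul_sum_left: assumes "finite I" "\<And>i. i \<in> I \<Longrightarrow> fs (f i)" "fs h"
  shows "emul hh tt (\<Sum>i\<in>I. f i) h = (\<Sum>i\<in>I. emul hh tt (f i) h)"
  using assms by (induct I rule: finite_induct) (auto simp: emul_add_left)

lemma emul_sum_right: assumes "finite I" "\<And>i. i \<in> I \<Longrightarrow> fs (f i)" "fs h"
  shows "emul hh tt h (\<Sum>i\<in>I. f i) = (\<Sum>i\<in>I. emul hh tt h (f i))"
  using assms by (induct I rule: finite_induct) (auto simp: emul_add_right)

lemma uminus_smul: "- f = smul (-1) f" by (simp add: fun_eq_iff)

lemma emul_diff_left: assumes "fs f" "fs g" "fs h"
  shows "emul hh tt (f - g) h = emul hh tt f h - emul hh tt g h"
  using assms emul_add_left[of f "-g" h] emul_smul_left[of g h hh tt "-1"]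
  by (simp add: uminus_smul[symmetric])

lemma emul_diff_right: assumes "fs f" "fs g" "fs h"
  shows "emul hh tt h (f - g) = emul hh tt h f - emul hh tt h g"
  using assms emul_add_right[of f "-g" h] emul_smul_right[of g h hh tt "-1"]
  by (simp add: uminus_smul[symmetric])

lemma Dw_add: assumes "fs f" "fs g" shows "Dw hh tt w (f + g) = Dw hh tt w f + Dw hh tt w g"
proof
  fix q
  show "Dw hh tt w (f + g) q = (Dw hh tt w f + Dw hh tt w g) q"
    using Dw_alt[of "supp f \<union> supp g" "f+g" hh tt w q] Dw_alt[of "supp f \<union> supp g" f hh tt w q]
      Dw_alt[of "supp f \<union> supp g" g hh tt w q] assms supp_add[of f g]
    by (auto simp: sum.distrib[symmetric] distrib_right)
qed

lemma Dw_smul: assumes "fs f" shows "Dw hh tt w (smul c f) = smul c (Dw hh tt w f)"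
proof
  fix q
  show "Dw hh tt w (smul c f) q = smul c (Dw hh tt w f) q"
    using Dw_alt[of "supp f" "smul c f" hh tt w q] Dw_alt[of "supp f" f hh tt w q] assms supp_smul[of c f]
    by (auto simp: sum_distrib_left mult.assoc)
qed

lemma Dw_zero[simp]: "Dw hh tt w 0 = 0" by (simp add: Dw_def fun_eq_iff)

lemma Dw_sum: assumes "finite I" "\<And>i. i \<in> I \<Longrightarrow> fs (f i)"
  shows "Dw hh tt w (\<Sum>i\<in>I. f i) = (\<Sum>i\<in>I. Dw hh tt w (f i))"
  using assms by (induct I rule: finite_induct) (auto simp: Dw_add)

lemma Dw_diff: assumes "fs f" "fs g" shows "Dw hh tt w (f - g) = Dw hh tt w f - Dw hh tt w g"
  using assms Dw_add[of f "-g"] Dw_smul[of g hh tt w "-1"] by (simp add: uminus_smul[symmetric])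

lemma supp_basis: "supp (basis p) = {p}" by (auto simp: supp_def basis_def)

lemma Dw_basis: "Dw hh tt w (basis p) = Dpath hh tt w p"
proof
  fix x show "Dw hh tt w (basis p) x = Dpath hh tt w p x"
    by (subst Dw_alt[of "{p}"]) (auto simp: supp_basis basis_def supp_def)
qed

lemma emul_basis: "emul hh tt (basis p) (basis q) = (case pmul hh tt p q of None \<Rightarrow> 0 | Some m \<Rightarrow> basis m)"
proof
  fix x show "emul hh tt (basis p) (basis q) x = (case pmul hh tt p q of None \<Rightarrow> 0 | Some m \<Rightarrow> basis m) x"
    by (subst emul_alt[of "{p}" "{q}"]) (auto simp: supp_basis basis_def supp_def split: option.splits)
qed

lemma expand_basis: assumes "fs f" shows "f = (\<Sum>p\<in>supp f. smul (f p) (basis p))"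
proof
  fix q
  show "f q = (\<Sum>p\<in>supp f. smul (f p) (basis p)) q"
  proof -
    have "(\<Sum>p\<in>supp f. smul (f p) (basis p)) q = (\<Sum>p\<in>supp f. if q = p then f p else 0)"
      by (auto simp: sum_fun_app basis_def intro!: sum.cong)
    thus ?thesis using assms by (auto simp: supp_def)
  qed
qed

lemma schouten_eq: "schouten Q hh tt r s g d =
   (\<Sum>a\<in>Q. emul hh tt (Dw hh tt (Star a) g) (Dw hh tt (Orig a) d)
      - smul (sgnc ((r - 1) * (s - 1))) (emul hh tt (Dw hh tt (Star a) d) (Dw hh tt (Orig a) g)))"
  by (rule ext) (simp add: schouten_def sum_fun_app)

lemma fs_schouten[simp]: "fs g \<Longrightarrow> fs d \<Longrightarrow> fs (schouten Q hh tt r s g d)"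
  by (simp add: schouten_eq)

lemma smul_add: "smul c (f + g) = smul c f + smul c g" by (simp add: fun_eq_iff algebra_simps)
lemma smul_diff: "smul c (f - g) = smul c f - smul c g" by (simp add: fun_eq_iff algebra_simps)
lemma smul_smul: "smul c (smul d f) = smul (c*d) f" by (simp add: fun_eq_iff algebra_simps)
lemma smul_sum: "smul c (sum f I) = (\<Sum>i\<in>I. smul c (f i))"
  by (simp add: fun_eq_iff sum_fun_app sum_distrib_left)
lemma smul_zero[simp]: "smul c 0 = 0" by (simp add: fun_eq_iff)
lemma smul_one[simp]: "smul 1 f = f" by (simp add: fun_eq_iff)

lemma schouten_add_left: assumes "fs f" "fs g" "fs h"
  shows "schouten Q hh tt r s (f + g) h = schouten Q hh tt r s f h + schouten Q hh tt r s g h"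
  using assms by (simp add: schouten_eq Dw_add emul_add_left emul_add_right smul_add sum.distrib[symmetric]
      algebra_simps)

lemma schouten_add_right: assumes "fs f" "fs g" "fs h"
  shows "schouten Q hh tt r s h (f + g) = schouten Q hh tt r s h f + schouten Q hh tt r s h g"
  using assms by (simp add: schouten_eq Dw_add emul_add_left emul_add_right smul_add sum.distrib[symmetric]
      algebra_simps)

lemma schouten_smul_left: assumes "fs f" "fs h"
  shows "schouten Q hh tt r s (smul c f) h = smul c (schouten Q hh tt r s f h)"
  using assms by (simp add: schouten_eq Dw_smul emul_smul_left emul_smul_right smul_diff smul_sum smul_smul mult.commute)

lemma schouten_smul_right: assumes "fs f" "fs h"
  shows "schouten Q hh tt r s h (smul c f) = smul c (schouten Q hh tt r s h f)"
  using assms by (simp add: schouten_eq Dw_smul emul_smul_left emul_smul_right smul_diff smul_sum smul_smul mult.commute)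

lemma schouten_zero_left[simp]: "schouten Q hh tt r s 0 h = 0"
  by (simp add: schouten_eq)
lemma schouten_zero_right[simp]: "schouten Q hh tt r s h 0 = 0"
  by (simp add: schouten_eq)

lemma schouten_sum_left: assumes "finite I" "\<And>i. i \<in> I \<Longrightarrow> fs (f i)" "fs h"
  shows "schouten Q hh tt r s (\<Sum>i\<in>I. f i) h = (\<Sum>i\<in>I. schouten Q hh tt r s (f i) h)"
  using assms by (induct I rule: finite_induct) (auto simp: schouten_add_left)

lemma schouten_sum_right: assumes "finite I" "\<And>i. i \<in> I \<Longrightarrow> fs (f i)" "fs h"
  shows "schouten Q hh tt r s h (\<Sum>i\<in>I. f i) = (\<Sum>i\<in>I. schouten Q hh tt r s h (f i))"
  using assms by (induct I rule: finite_induct) (auto simp: schouten_add_right)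



lemma sgnc_sq[simp]: "sgnc e * sgnc e = 1" by (simp add: sgnc_def)
lemma sgnc_add: "sgnc (a + b) = sgnc a * sgnc b" by (auto simp: sgnc_def)
lemma sgnc_eq_iff: "sgnc a = sgnc b \<longleftrightarrow> (even a \<longleftrightarrow> even b)" by (auto simp: sgnc_def)

lemma alg_antisym: fixes s :: complex
  assumes "s*s = 1" "a = x - s*y" "b = y - s*x" shows "a - (- s * b) = 0"
proof -
  have "a - (- s * b) = x - (s*s)*x" unfolding assms(2,3) by (simp add: algebra_simps)
  thus ?thesis using assms(1) by simp
qed

lemma partI:
  "(\<lambda>q. schouten Q hh tt (int r) (int s) A B q
              - (- sgnc ((int r - 1) * (int s - 1)) * schouten Q hh tt (int s) (int r) B A q)) = (\<lambda>q. 0)"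
proof
  fix q
  let ?x = "\<lambda>a. emul hh tt (Dw hh tt (Star a) A) (Dw hh tt (Orig a) B) q"
  let ?y = "\<lambda>a. emul hh tt (Dw hh tt (Star a) B) (Dw hh tt (Orig a) A) q"
  let ?s = "sgnc ((int r - 1) * (int s - 1))"
  have e: "sgnc ((int s - 1) * (int r - 1)) = ?s" by (simp add: mult.commute)
  have "schouten Q hh tt (int r) (int s) A B q = (\<Sum>a\<in>Q. ?x a) - ?s * (\<Sum>a\<in>Q. ?y a)"
    by (simp add: schouten_def sum_subtractf sum_distrib_left)
  moreover have "schouten Q hh tt (int s) (int r) B A q = (\<Sum>a\<in>Q. ?y a) - ?s * (\<Sum>a\<in>Q. ?x a)"
    using e by (simp add: schouten_def sum_subtractf sum_distrib_left)
  ultimately show "schouten Q hh tt (int r) (int s) A B q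
              - (- ?s * schouten Q hh tt (int s) (int r) B A q) = 0"
    by (intro alg_antisym) simp_all
qed



definition qclosed :: "('a \<Rightarrow> 'v) \<Rightarrow> ('a \<Rightarrow> 'v) \<Rightarrow> 'a darrow list \<Rightarrow> bool" where
  "qclosed hh tt zs \<longleftrightarrow> zs \<noteq> [] \<and> dt hh tt (last zs) = dh hh tt (hd zs)"
definition rot :: "'a darrow list \<Rightarrow> nat \<Rightarrow> 'a darrow list" where
  "rot zs i = drop (Suc i) zs @ take i zs"
definition eps :: "'a darrow list \<Rightarrow> nat \<Rightarrow> complex" where
  "eps zs i = sgnc (int (nstars (drop (Suc i) zs)) * int (nstars (take (Suc i) zs)))"
definition mkp :: "'v \<Rightarrow> 'a darrow list \<Rightarrow> ('v,'a) qpath" where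
  "mkp v ys = (if ys = [] then Triv v else Arr ys)"

lemma word_mkp: "word v ys = basis (mkp v ys)" by (simp add: word_def mkp_def)

lemma nstars_append[simp]: "nstars (xs @ ys) = nstars xs + nstars ys" by (simp add: nstars_def)
lemma nstars_Nil[simp]: "nstars [] = 0" by (simp add: nstars_def)
lemma nstars_Cons[simp]: "nstars (x # xs) = (if is_star x then 1 else 0) + nstars xs" by (simp add: nstars_def)
lemma nstars_take_drop: "nstars (take k xs) + nstars (drop k xs) = nstars xs"
  by (metis append_take_drop_id nstars_append)

lemma sgnc_0[simp]: "sgnc 0 = 1" by (simp add: sgnc_def)
lemma sgnc_mult: "sgnc a * sgnc b = sgnc (a + b)" by (simp add: sgnc_add)

lemma Dpath_term:
  assumes "i < length zs" "zs ! i = w"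
  shows "emul hh tt (word (dt hh tt w) (drop (Suc i) zs)) (word (dh hh tt w) (take i zs))
       = (if qclosed hh tt zs then basis (mkp (dt hh tt w) (rot zs i)) else 0)"
proof -
  have ne: "zs \<noteq> []" using assms by auto
  have hd: "hd zs = zs ! 0" using ne by (simp add: hd_conv_nth)
  have lst: "last zs = zs ! (length zs - 1)" using ne by (simp add: last_conv_nth)
  show ?thesis
  proof (cases "Suc i = length zs")
    case True
    hence d: "drop (Suc i) zs = []" by simp
    show ?thesis
    proof (cases "i = 0")
      case True
      with d assms show ?thesis
        by (auto simp: word_def emul_basis qclosed_def rot_def mkp_def hd lst)
    next
      case False
      hence tk: "take i zs \<noteq> []" "hd (take i zs) = zs ! 0" using assms ne by (auto simp: hd_conv_nth)
      have l: "last zs = zs ! i" using \<open>Suc i = length zs\<close> lst by (metis diff_Suc_1)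
      show ?thesis using d tk assms \<open>Suc i = length zs\<close>
        by (auto simp: word_def emul_basis qclosed_def rot_def mkp_def hd l)
    qed
  next
    case False
    hence d: "drop (Suc i) zs \<noteq> []" "last (drop (Suc i) zs) = last zs" using assms by auto
    show ?thesis
    proof (cases "i = 0")
      case True
      with d assms show ?thesis
        by (auto simp: word_def emul_basis qclosed_def rot_def mkp_def hd)
    next
      case False
      hence tk: "take i zs \<noteq> []" "hd (take i zs) = zs ! 0" using assms ne by (auto simp: hd_conv_nth)
      show ?thesis using d tk assms
        by (auto simp: word_def emul_basis qclosed_def rot_def mkp_def hd)
    qed
  qed
qed

lemma Dpath_Arr: "Dpath hh tt w (Arr zs) = (if qclosed hh tt zs then
   (\<Sum>i<length zs. if zs ! i = w then smul (eps zs i) (basis (mkp (dt hh tt w) (rot zs i))) else 0) else 0)"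
proof
  fix q
  show "Dpath hh tt w (Arr zs) q = (if qclosed hh tt zs then
   (\<Sum>i<length zs. if zs ! i = w then smul (eps zs i) (basis (mkp (dt hh tt w) (rot zs i))) else 0) else 0) q"
  proof (cases "qclosed hh tt zs")
    case True thus ?thesis by (auto simp: sum_fun_app Dpath_term eps_def intro!: sum.cong)
  next
    case False thus ?thesis by (auto simp: sum_fun_app Dpath_term eps_def intro!: sum.neutral)
  qed
qed

declare Dpath.simps(2)[simp del]

lemma sum_lessThan_add: "(\<Sum>i<(m::nat)+n. f i) = (\<Sum>i<m. f i) + (\<Sum>k<n. f (m+k))"
  by (induct n) (auto simp: add.assoc)

lemma eps_app1: assumes "i < length xs"
  shows "eps (xs @ ys) i = sgnc (int (nstars xs) * int (nstars ys)) * eps (ys @ xs) (length ys + i)"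
proof -
  let ?a = "nstars (drop (Suc i) xs)" and ?b = "nstars (take (Suc i) xs)" and ?Y = "nstars ys"
  have X: "nstars xs = ?b + ?a" using nstars_take_drop[of "Suc i" xs] by simp
  have l: "eps (xs @ ys) i = sgnc (int (?a + ?Y) * int ?b)" using assms by (simp add: eps_def)
  have r: "eps (ys @ xs) (length ys + i) = sgnc (int ?a * int (?Y + ?b))" by (simp add: eps_def)
  show ?thesis unfolding l r X sgnc_mult by (simp add: sgnc_eq_iff algebra_simps even_add even_mult_iff)
qed

lemma eps_app2: assumes "k < length ys"
  shows "eps (xs @ ys) (length xs + k) = sgnc (int (nstars xs) * int (nstars ys)) * eps (ys @ xs) k"
proof -
  let ?a = "nstars (drop (Suc k) ys)" and ?b = "nstars (take (Suc k) ys)" and ?X = "nstars xs"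
  have Y: "nstars ys = ?b + ?a" using nstars_take_drop[of "Suc k" ys] by simp
  have l: "eps (xs @ ys) (length xs + k) = sgnc (int ?a * int (?X + ?b))" by (simp add: eps_def)
  have r: "eps (ys @ xs) k = sgnc (int (?a + ?X) * int ?b)" using assms by (simp add: eps_def)
  show ?thesis unfolding l r Y sgnc_mult by (simp add: sgnc_eq_iff algebra_simps even_add even_mult_iff)
qed

lemma rot_app1: "i < length xs \<Longrightarrow> rot (xs @ ys) i = rot (ys @ xs) (length ys + i)"
  by (simp add: rot_def)
lemma rot_app2: "k < length ys \<Longrightarrow> rot (xs @ ys) (length xs + k) = rot (ys @ xs) k"
  by (simp add: rot_def)

lemma Dpath_rot: assumes "qclosed hh tt (xs @ ys)" "qclosed hh tt (ys @ xs)"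
  shows "Dpath hh tt w (Arr (xs @ ys)) = smul (sgnc (int (nstars xs) * int (nstars ys))) (Dpath hh tt w (Arr (ys @ xs)))"
proof -
  let ?s = "sgnc (int (nstars xs) * int (nstars ys))"
  let ?F = "\<lambda>zs i. if zs ! i = w then smul (eps zs i) (basis (mkp (dt hh tt w) (rot zs i))) else 0"
  have "Dpath hh tt w (Arr (xs @ ys)) = (\<Sum>i<length xs + length ys. ?F (xs@ys) i)"
    unfolding Dpath_Arr using assms(1) by simp
  also have "\<dots> = (\<Sum>i<length xs. ?F (xs@ys) i) + (\<Sum>k<length ys. ?F (xs@ys) (length xs + k))"
    by (rule sum_lessThan_add)
  also have "(\<Sum>i<length xs. ?F (xs@ys) i) = (\<Sum>i<length xs. smul ?s (?F (ys@xs) (length ys + i)))"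
    by (rule sum.cong) (auto simp: eps_app1 rot_app1 nth_append smul_smul)
  also have "(\<Sum>k<length ys. ?F (xs@ys) (length xs + k)) = (\<Sum>k<length ys. smul ?s (?F (ys@xs) k))"
    by (rule sum.cong) (auto simp: eps_app2 rot_app2 nth_append smul_smul)
  also have "(\<Sum>i<length xs. smul ?s (?F (ys@xs) (length ys + i))) + (\<Sum>k<length ys. smul ?s (?F (ys@xs) k))
     = smul ?s ((\<Sum>k<length ys. ?F (ys@xs) k) + (\<Sum>i<length xs. ?F (ys@xs) (length ys + i)))"
    by (simp add: smul_add smul_sum)
  also have "(\<Sum>k<length ys. ?F (ys@xs) k) + (\<Sum>i<length xs. ?F (ys@xs) (length ys + i)) = (\<Sum>i<length ys + length xs. ?F (ys@xs) i)"
    by (rule sum_lessThan_add[symmetric])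
  also have "\<dots> = Dpath hh tt w (Arr (ys @ xs))"
    unfolding Dpath_Arr using assms(2) by simp
  finally show ?thesis .
qed

lemma Dpath_nc: "\<not> qclosed hh tt zs \<Longrightarrow> Dpath hh tt w (Arr zs) = 0"
  unfolding Dpath_Arr by simp

lemma Dw_comm_basis: assumes "p1 \<noteq> Arr []" "p2 \<noteq> Arr []"
  shows "Dw hh tt w (emul hh tt (basis p1) (basis p2))
     = smul (sgnc (int (path_stars p1) * int (path_stars p2))) (Dw hh tt w (emul hh tt (basis p2) (basis p1)))"
proof (cases p1)
  case (Triv i)
  show ?thesis
  proof (cases p2)
    case (Triv j) thus ?thesis using \<open>p1 = Triv i\<close> by (simp add: emul_basis)
  next
    case (Arr ys)
    hence ne: "ys \<noteq> []" using assms by auto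
    have c: "qclosed hh tt ys \<longleftrightarrow> dt hh tt (last ys) = dh hh tt (hd ys)" using ne by (simp add: qclosed_def)
    show ?thesis
    proof (cases "i = dh hh tt (hd ys)"; cases "dt hh tt (last ys) = i")
      assume "i = dh hh tt (hd ys)" "dt hh tt (last ys) = i"
      thus ?thesis using \<open>p1 = Triv i\<close> Arr by (simp add: emul_basis Dw_basis)
    next
      assume "i = dh hh tt (hd ys)" "dt hh tt (last ys) \<noteq> i"
      thus ?thesis using \<open>p1 = Triv i\<close> Arr c by (simp add: emul_basis Dw_basis Dpath_nc)
    next
      assume "i \<noteq> dh hh tt (hd ys)" "dt hh tt (last ys) = i"
      thus ?thesis using \<open>p1 = Triv i\<close> Arr c by (simp add: emul_basis Dw_basis Dpath_nc)
    next
      assume "i \<noteq> dh hh tt (hd ys)" "dt hh tt (last ys) \<noteq> i"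
      thus ?thesis using \<open>p1 = Triv i\<close> Arr by (simp add: emul_basis)
    qed
  qed
next
  case (Arr xs)
  hence nx: "xs \<noteq> []" using assms by auto
  show ?thesis
  proof (cases p2)
    case (Triv i)
    have c: "qclosed hh tt xs \<longleftrightarrow> dt hh tt (last xs) = dh hh tt (hd xs)" using nx by (simp add: qclosed_def)
    show ?thesis
    proof (cases "i = dh hh tt (hd xs)"; cases "dt hh tt (last xs) = i")
      assume "i = dh hh tt (hd xs)" "dt hh tt (last xs) = i"
      thus ?thesis using \<open>p1 = Arr xs\<close> Triv by (simp add: emul_basis Dw_basis)
    next
      assume "i = dh hh tt (hd xs)" "dt hh tt (last xs) \<noteq> i"
      thus ?thesis using \<open>p1 = Arr xs\<close> Triv c by (simp add: emul_basis Dw_basis Dpath_nc)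
    next
      assume "i \<noteq> dh hh tt (hd xs)" "dt hh tt (last xs) = i"
      thus ?thesis using \<open>p1 = Arr xs\<close> Triv c by (simp add: emul_basis Dw_basis Dpath_nc)
    next
      assume "i \<noteq> dh hh tt (hd xs)" "dt hh tt (last xs) \<noteq> i"
      thus ?thesis using \<open>p1 = Arr xs\<close> Triv by (simp add: emul_basis)
    qed
  next
    case (Arr ys)
    hence ny: "ys \<noteq> []" using assms by auto
    have c1: "qclosed hh tt (xs @ ys) \<longleftrightarrow> dt hh tt (last ys) = dh hh tt (hd xs)" using nx ny by (simp add: qclosed_def)
    have c2: "qclosed hh tt (ys @ xs) \<longleftrightarrow> dt hh tt (last xs) = dh hh tt (hd ys)" using nx ny by (simp add: qclosed_def)
    show ?thesis
    proof (cases "dt hh tt (last ys) = dh hh tt (hd xs)"; cases "dt hh tt (last xs) = dh hh tt (hd ys)")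
      assume a: "dt hh tt (last ys) = dh hh tt (hd xs)" "dt hh tt (last xs) = dh hh tt (hd ys)"
      hence cc: "qclosed hh tt (xs @ ys)" "qclosed hh tt (ys @ xs)" using c1 c2 by auto
      have e1: "emul hh tt (basis (Arr xs)) (basis (Arr ys)) = basis (Arr (xs@ys))"
        using a(2) by (simp add: emul_basis)
      have e2: "emul hh tt (basis (Arr ys)) (basis (Arr xs)) = basis (Arr (ys@xs))"
        using a(1) by (simp add: emul_basis)
      show ?thesis unfolding \<open>p1 = Arr xs\<close> Arr e1 e2 Dw_basis path_stars.simps
        by (rule Dpath_rot[OF cc])
    next
      assume a: "dt hh tt (last ys) = dh hh tt (hd xs)" "dt hh tt (last xs) \<noteq> dh hh tt (hd ys)"
      hence "\<not> qclosed hh tt (ys @ xs)" using c2 by auto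
      thus ?thesis using \<open>p1 = Arr xs\<close> Arr a by (simp add: emul_basis Dw_basis Dpath_nc)
    next
      assume a: "dt hh tt (last ys) \<noteq> dh hh tt (hd xs)" "dt hh tt (last xs) = dh hh tt (hd ys)"
      hence "\<not> qclosed hh tt (xs @ ys)" using c1 by auto
      thus ?thesis using \<open>p1 = Arr xs\<close> Arr a by (simp add: emul_basis Dw_basis Dpath_nc)
    next
      assume a: "dt hh tt (last ys) \<noteq> dh hh tt (hd xs)" "dt hh tt (last xs) \<noteq> dh hh tt (hd ys)"
      thus ?thesis using \<open>p1 = Arr xs\<close> Arr by (simp add: emul_basis)
    qed
  qed
qed

lemma emul_expand: assumes "fs P" "fs R"
  shows "emul hh tt P R = (\<Sum>p1\<in>supp P. \<Sum>p2\<in>supp R. smul (P p1 * R p2) (emul hh tt (basis p1) (basis p2)))"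
proof -
  have "emul hh tt P R = emul hh tt (\<Sum>p1\<in>supp P. smul (P p1) (basis p1)) (\<Sum>p2\<in>supp R. smul (R p2) (basis p2))"
    by (simp only: expand_basis[OF assms(1), symmetric] expand_basis[OF assms(2), symmetric])
  also have "\<dots> = (\<Sum>p1\<in>supp P. \<Sum>p2\<in>supp R. emul hh tt (smul (P p1) (basis p1)) (smul (R p2) (basis p2)))"
    using assms by (subst emul_sum_left) (auto intro!: sum.cong simp: emul_sum_right)
  also have "\<dots> = (\<Sum>p1\<in>supp P. \<Sum>p2\<in>supp R. smul (P p1 * R p2) (emul hh tt (basis p1) (basis p2)))"
    by (simp add: emul_smul_left emul_smul_right smul_smul mult.commute)
  finally show ?thesis .
qed

lemma graded_fs: "P \<in> graded I Q hh tt p \<Longrightarrow> fs P"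
  by (simp add: graded_def in_CQ_def supp_def)
lemma graded_supp: "P \<in> graded I Q hh tt p \<Longrightarrow> x \<in> supp P \<Longrightarrow> path_stars x = p \<and> valid_path I Q hh tt x"
  by (simp add: graded_def in_CQ_def supp_def)

lemma valid_not_nil: "valid_path I Q hh tt x \<Longrightarrow> x \<noteq> Arr []" by auto

lemma Dw_gen: assumes "P \<in> graded I Q hh tt p" "R \<in> graded I Q hh tt r"
  shows "Dw hh tt w (emul hh tt P R - smul (sgnc (int p * int r)) (emul hh tt R P)) = 0"
proof -
  have fP: "fs P" and fR: "fs R" using assms by (auto intro: graded_fs)
  let ?s = "sgnc (int p * int r)"
  have "Dw hh tt w (emul hh tt P R) = (\<Sum>p1\<in>supp P. \<Sum>p2\<in>supp R. smul (P p1 * R p2) (Dw hh tt w (emul hh tt (basis p1) (basis p2))))"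
    using fP fR by (subst emul_expand[OF fP fR]) (simp add: Dw_sum Dw_smul)
  also have "\<dots> = (\<Sum>p1\<in>supp P. \<Sum>p2\<in>supp R. smul ?s (smul (R p2 * P p1) (Dw hh tt w (emul hh tt (basis p2) (basis p1)))))"
  proof (intro sum.cong refl)
    fix p1 p2 assume "p1 \<in> supp P" "p2 \<in> supp R"
    hence "path_stars p1 = p \<and> valid_path I Q hh tt p1" "path_stars p2 = r \<and> valid_path I Q hh tt p2"
      using graded_supp assms by blast+
    hence nn: "p1 \<noteq> Arr []" "p2 \<noteq> Arr []" and st: "path_stars p1 = p" "path_stars p2 = r" by auto
    show "smul (P p1 * R p2) (Dw hh tt w (emul hh tt (basis p1) (basis p2))) = smul ?s (smul (R p2 * P p1) (Dw hh tt w (emul hh tt (basis p2) (basis p1))))"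
      unfolding Dw_comm_basis[OF nn, of hh tt w] st by (simp add: smul_smul mult.commute)
  qed
  also have "\<dots> = smul ?s (\<Sum>p2\<in>supp R. \<Sum>p1\<in>supp P. smul (R p2 * P p1) (Dw hh tt w (emul hh tt (basis p2) (basis p1))))"
    by (simp add: smul_sum sum.swap[of _ "supp P"])
  also have "\<dots> = smul ?s (Dw hh tt w (emul hh tt R P))"
    using fP fR by (subst emul_expand[OF fR fP]) (simp add: Dw_sum Dw_smul)
  finally show ?thesis using fP fR by (simp add: Dw_diff Dw_smul)
qed

lemma relspan_Dw: "x \<in> relspan I Q hh tt \<Longrightarrow> fs x \<and> (\<forall>w. Dw hh tt w x = 0)"
proof (induct rule: relspan.induct)
  case zero
  show ?case by (simp add: supp_def Dw_def)
next
  case (gen x)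
  then obtain P R p r where x: "x = (\<lambda>q. emul hh tt P R q - sgnc (int p * int r) * emul hh tt R P q)"
    and g: "P \<in> graded I Q hh tt p" "R \<in> graded I Q hh tt r"
    unfolding relgens_def by blast
  have x': "x = emul hh tt P R - smul (sgnc (int p * int r)) (emul hh tt R P)"
    unfolding x by (simp add: fun_eq_iff)
  have fP: "fs P" and fR: "fs R" using g by (auto intro: graded_fs)
  have "fs x" unfolding x' using fP fR by simp
  moreover have "Dw hh tt w x = 0" for w unfolding x' by (rule Dw_gen[OF g])
  ultimately show ?case by simp
next
  case (add x y)
  have "(\<lambda>q. x q + y q) = x + y" by (simp add: fun_eq_iff)
  thus ?case using add by (simp add: Dw_add)
next
  case (scale x c)
  have "(\<lambda>q. c * x q) = smul c x" by (simp add: fun_eq_iff)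
  thus ?case using scale by (simp add: Dw_smul)
qed



abbreviation RS where "RS I Q hh tt \<equiv> relspan I Q hh tt"

lemma rs_zero[simp]: "0 \<in> relspan I Q hh tt"
  unfolding zero_fun_def by (rule relspan.zero)
lemma rs_add: "x \<in> relspan I Q hh tt \<Longrightarrow> y \<in> relspan I Q hh tt \<Longrightarrow> x + y \<in> relspan I Q hh tt"
  using relspan.add[of x I Q hh tt y] by (simp add: plus_fun_def)
lemma rs_smul: "x \<in> relspan I Q hh tt \<Longrightarrow> smul c x \<in> relspan I Q hh tt"
  using relspan.scale[of x I Q hh tt c] by (simp add: smul_def)
lemma rs_uminus: "x \<in> relspan I Q hh tt \<Longrightarrow> - x \<in> relspan I Q hh tt"
  using rs_smul[of x I Q hh tt "-1"] by (simp add: uminus_smul)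
lemma rs_diff: "x \<in> relspan I Q hh tt \<Longrightarrow> y \<in> relspan I Q hh tt \<Longrightarrow> x - y \<in> relspan I Q hh tt"
  using rs_add[OF _ rs_uminus] by (metis diff_conv_add_uminus)
lemma rs_sum: "(\<And>i. i \<in> S \<Longrightarrow> f i \<in> relspan I Q hh tt) \<Longrightarrow> sum f S \<in> relspan I Q hh tt"
  by (induct S rule: infinite_finite_induct) (auto intro: rs_add)

lemma schouten_rs_right: assumes "x \<in> relspan I Q hh tt"
  shows "schouten Q hh tt r s g x = 0"
  using relspan_Dw[OF assms] by (simp add: schouten_eq)

lemma schouten_rs_left: assumes "x \<in> relspan I Q hh tt"
  shows "schouten Q hh tt r s x g = 0"
  using relspan_Dw[OF assms] by (simp add: schouten_eq)

fun walk :: "('a \<Rightarrow> 'v) \<Rightarrow> ('a \<Rightarrow> 'v) \<Rightarrow> 'v \<Rightarrow> 'v \<Rightarrow> 'a darrow list \<Rightarrow> bool" where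
  "walk hh tt u v [] = (u = v)"
| "walk hh tt u v (x # xs) = (dh hh tt x = u \<and> walk hh tt (dt hh tt x) v xs)"

lemma walk_append: "walk hh tt u w (xs @ ys) \<longleftrightarrow> (\<exists>m. walk hh tt u m xs \<and> walk hh tt m w ys)"
  by (induct xs arbitrary: u) auto

lemma walk_ends: "walk hh tt u v xs \<Longrightarrow> xs \<noteq> [] \<Longrightarrow> dh hh tt (hd xs) = u \<and> dt hh tt (last xs) = v"
  by (induct xs arbitrary: u) (auto elim: walk.elims)

lemma walk_chain: "walk hh tt u v xs \<Longrightarrow> Suc k < length xs \<Longrightarrow> dt hh tt (xs ! k) = dh hh tt (xs ! Suc k)"
proof (induct xs arbitrary: u k)
  case Nil thus ?case by simp
next
  case (Cons x xs)
  show ?case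
  proof (cases k)
    case 0
    then show ?thesis using Cons by (cases xs) auto
  next
    case (Suc k')
    then show ?thesis using Cons by auto
  qed
qed

lemma walk_closed: "walk hh tt u u xs \<Longrightarrow> xs \<noteq> [] \<Longrightarrow> qclosed hh tt xs"
  using walk_ends[of hh tt u u xs] by (simp add: qclosed_def)

lemma walk_rot: assumes "walk hh tt u u X" "i < length X"
  shows "walk hh tt (dt hh tt (X ! i)) (dh hh tt (X ! i)) (rot X i)"
proof -
  have X: "X = take i X @ (X ! i) # drop (Suc i) X" using assms(2) by (simp add: id_take_nth_drop)
  from assms(1) X obtain m where "walk hh tt u m (take i X)" "walk hh tt m u ((X ! i) # drop (Suc i) X)"
    by (metis walk_append)
  thus ?thesis unfolding rot_def walk_append by auto
qed

definition arrs :: "'a set \<Rightarrow> 'a darrow list \<Rightarrow> bool" where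
  "arrs Q xs \<longleftrightarrow> (\<forall>x\<in>set xs. base_arrow x \<in> Q)"

lemma arrs_append[simp]: "arrs Q (xs @ ys) \<longleftrightarrow> arrs Q xs \<and> arrs Q ys" by (auto simp: arrs_def)
lemma arrs_rot: "arrs Q X \<Longrightarrow> arrs Q (rot X i)"
  by (auto simp: arrs_def rot_def dest: in_set_dropD in_set_takeD)

lemma walk_valid: "walk hh tt u v xs \<Longrightarrow> xs \<noteq> [] \<Longrightarrow> arrs Q xs \<Longrightarrow> valid_path I Q hh tt (Arr xs)"
  by (auto simp: arrs_def dest: walk_chain)

lemma basis_graded: "valid_path I Q hh tt p \<Longrightarrow> smul c (basis p) \<in> graded I Q hh tt (path_stars p)"
  by (auto simp: graded_def in_CQ_def basis_def intro: rev_finite_subset[of "{p}"])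

lemma emul_basis_arr: assumes "walk hh tt a m P" "P \<noteq> []" "R \<noteq> []" "walk hh tt m b R"
  shows "emul hh tt (basis (Arr P)) (basis (Arr R)) = basis (Arr (P @ R))"
  using walk_ends[OF assms(1,2)] walk_ends[OF assms(4,3)] by (simp add: emul_basis)

lemma rel_rot:
  assumes w1: "walk hh tt a a (P @ R)" and w2: "walk hh tt b b (R @ P)" and ar: "arrs Q (P @ R)"
    and ab: "P @ R = [] \<Longrightarrow> a = b"
  shows "smul c (basis (mkp a (P @ R))) - smul (c * sgnc (int (nstars P) * int (nstars R))) (basis (mkp b (R @ P)))
     \<in> relspan I Q hh tt"
proof (cases "P = [] \<or> R = []")
  case True
  hence "smul c (basis (mkp a (P @ R))) - smul (c * sgnc (int (nstars P) * int (nstars R))) (basis (mkp b (R @ P))) = 0"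
    using ab by (auto simp: mkp_def)
  thus ?thesis by simp
next
  case False
  hence nP: "P \<noteq> []" and nR: "R \<noteq> []" by auto
  from w1 obtain m where m: "walk hh tt a m P" "walk hh tt m a R" by (auto simp: walk_append)
  from w2 obtain m' where m': "walk hh tt b m' R" "walk hh tt m' b P" by (auto simp: walk_append)
  have vP: "valid_path I Q hh tt (Arr P)" using walk_valid[OF m(1) nP, where Q=Q and I=I] ar by simp
  have vR: "valid_path I Q hh tt (Arr R)" using walk_valid[OF m(2) nR, where Q=Q and I=I] ar by simp
  have g1: "smul c (basis (Arr P)) \<in> graded I Q hh tt (nstars P)" using basis_graded[OF vP] by simp
  have g2: "basis (Arr R) \<in> graded I Q hh tt (nstars R)" using basis_graded[OF vR, of 1] by simp
  have e1: "emul hh tt (smul c (basis (Arr P))) (basis (Arr R)) = smul c (basis (Arr (P @ R)))"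
    by (simp add: emul_smul_left emul_basis_arr[OF m(1) nP nR m(2)])
  have e2: "emul hh tt (basis (Arr R)) (smul c (basis (Arr P))) = smul c (basis (Arr (R @ P)))"
    by (simp add: emul_smul_right emul_basis_arr[OF m'(1) nR nP m'(2)])
  have "(\<lambda>q. emul hh tt (smul c (basis (Arr P))) (basis (Arr R)) q
       - sgnc (int (nstars P) * int (nstars R)) * emul hh tt (basis (Arr R)) (smul c (basis (Arr P))) q)
       \<in> relgens I Q hh tt"
    unfolding relgens_def using g1 g2 by blast
  hence "(\<lambda>q. emul hh tt (smul c (basis (Arr P))) (basis (Arr R)) q
       - sgnc (int (nstars P) * int (nstars R)) * emul hh tt (basis (Arr R)) (smul c (basis (Arr P))) q)
       \<in> relspan I Q hh tt" by (rule relspan.gen)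
  moreover have "(\<lambda>q. emul hh tt (smul c (basis (Arr P))) (basis (Arr R)) q
       - sgnc (int (nstars P) * int (nstars R)) * emul hh tt (basis (Arr R)) (smul c (basis (Arr P))) q)
     = smul c (basis (mkp a (P @ R))) - smul (c * sgnc (int (nstars P) * int (nstars R))) (basis (mkp b (R @ P)))"
    using e1 e2 nP nR by (simp add: mkp_def fun_eq_iff algebra_simps)
  ultimately show ?thesis by simp
qed



fun dual :: "'a darrow \<Rightarrow> 'a darrow" where
  "dual (Orig a) = Star a" | "dual (Star a) = Orig a"

lemma dual_dual[simp]: "dual (dual x) = x" by (cases x) auto
lemma dt_dual[simp]: "dt hh tt (dual x) = dh hh tt x" by (cases x) auto
lemma dh_dual[simp]: "dh hh tt (dual x) = dt hh tt x" by (cases x) auto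
lemma star_dual[simp]: "is_star (dual x) = (\<not> is_star x)" by (cases x) auto
lemma dual_eq_iff: "(x = dual y) = (y = dual x)" by (cases x; cases y) auto

lemma DwC: assumes "walk hh tt v v X"
  shows "Dw hh tt w (basis (mkp v X)) = (\<Sum>i<length X. if X ! i = w then smul (eps X i) (basis (mkp (dt hh tt w) (rot X i))) else 0)"
proof (cases "X = []")
  case True thus ?thesis by (simp add: Dw_basis mkp_def zero_fun_def)
next
  case False
  hence "qclosed hh tt X" using walk_closed[OF assms] by simp
  thus ?thesis using False by (simp add: Dw_basis mkp_def Dpath_Arr)
qed

lemma emulC: assumes "walk hh tt a b u" "walk hh tt b a v"
  shows "emul hh tt (basis (mkp a u)) (basis (mkp b v)) = basis (mkp a (u @ v))"
proof (cases "u = []"; cases "v = []")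
  assume "u = []" "v = []" thus ?thesis using assms by (simp add: mkp_def emul_basis)
next
  assume "u = []" "v \<noteq> []" thus ?thesis using assms walk_ends[OF assms(2)] by (simp add: mkp_def emul_basis)
next
  assume "u \<noteq> []" "v = []" thus ?thesis using assms walk_ends[OF assms(1)] by (simp add: mkp_def emul_basis)
next
  assume "u \<noteq> []" "v \<noteq> []" thus ?thesis using assms walk_ends[OF assms(1)] walk_ends[OF assms(2)]
    by (simp add: mkp_def emul_basis)
qed

lemma emul_if_left: "emul hh tt (if c then f else 0) g = (if c then emul hh tt f g else 0)" by simp
lemma emul_if_right: "emul hh tt g (if c then f else 0) = (if c then emul hh tt g f else 0)" by simp

definition Tm :: "('a \<Rightarrow> 'v) \<Rightarrow> ('a \<Rightarrow> 'v) \<Rightarrow> 'a darrow list \<Rightarrow> 'a darrow list \<Rightarrow> ('v,'a) elt" where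
  "Tm hh tt X Y = (\<Sum>i<length X. \<Sum>j<length Y. if is_star (X ! i) \<and> Y ! j = dual (X ! i)
     then smul (eps X i * eps Y j) (basis (mkp (dt hh tt (X ! i)) (rot X i @ rot Y j))) else 0)"

lemma Tm_eq: assumes "walk hh tt v v X" "walk hh tt u u Y" "arrs Q X" "finite Q"
  shows "(\<Sum>a\<in>Q. emul hh tt (Dw hh tt (Star a) (basis (mkp v X))) (Dw hh tt (Orig a) (basis (mkp u Y)))) = Tm hh tt X Y"
proof -
  have "(\<Sum>a\<in>Q. emul hh tt (Dw hh tt (Star a) (basis (mkp v X))) (Dw hh tt (Orig a) (basis (mkp u Y))))
    = (\<Sum>a\<in>Q. \<Sum>i<length X. \<Sum>j<length Y. if X ! i = Star a \<and> Y ! j = Orig a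
         then smul (eps X i * eps Y j) (basis (mkp (hh a) (rot X i @ rot Y j))) else 0)"
  proof (rule sum.cong[OF refl])
    fix a assume "a \<in> Q"
    have "emul hh tt (Dw hh tt (Star a) (basis (mkp v X))) (Dw hh tt (Orig a) (basis (mkp u Y)))
      = (\<Sum>i<length X. \<Sum>j<length Y. emul hh tt (if X ! i = Star a then smul (eps X i) (basis (mkp (hh a) (rot X i))) else 0)
           (if Y ! j = Orig a then smul (eps Y j) (basis (mkp (tt a) (rot Y j))) else 0))"
      unfolding DwC[OF assms(1)] DwC[OF assms(2)]
      by (subst emul_sum_left) (auto intro!: sum.cong simp: emul_sum_right)
    also have "\<dots> = (\<Sum>i<length X. \<Sum>j<length Y. if X ! i = Star a \<and> Y ! j = Orig a
         then smul (eps X i * eps Y j) (basis (mkp (hh a) (rot X i @ rot Y j))) else 0)"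
    proof (intro sum.cong refl)
      fix i j assume i: "i \<in> {..<length X}" and j: "j \<in> {..<length Y}"
      show "emul hh tt (if X ! i = Star a then smul (eps X i) (basis (mkp (hh a) (rot X i))) else 0)
           (if Y ! j = Orig a then smul (eps Y j) (basis (mkp (tt a) (rot Y j))) else 0) =
           (if X ! i = Star a \<and> Y ! j = Orig a
         then smul (eps X i * eps Y j) (basis (mkp (hh a) (rot X i @ rot Y j))) else 0)"
      proof (cases "X ! i = Star a \<and> Y ! j = Orig a")
        case True
        have w1: "walk hh tt (hh a) (tt a) (rot X i)" using walk_rot[OF assms(1), of i] i True by simp
        have w2: "walk hh tt (tt a) (hh a) (rot Y j)" using walk_rot[OF assms(2), of j] j True by simp
        show ?thesis using True by (simp add: emul_smul_left emul_smul_right emulC[OF w1 w2] smul_smul mult.commute)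
      qed auto
    qed
    finally show "emul hh tt (Dw hh tt (Star a) (basis (mkp v X))) (Dw hh tt (Orig a) (basis (mkp u Y)))
      = (\<Sum>i<length X. \<Sum>j<length Y. if X ! i = Star a \<and> Y ! j = Orig a
         then smul (eps X i * eps Y j) (basis (mkp (hh a) (rot X i @ rot Y j))) else 0)" .
  qed
  also have "\<dots> = (\<Sum>i<length X. \<Sum>j<length Y. \<Sum>a\<in>Q. if X ! i = Star a \<and> Y ! j = Orig a
         then smul (eps X i * eps Y j) (basis (mkp (hh a) (rot X i @ rot Y j))) else 0)"
    by (simp add: sum.swap[of _ Q])
  also have "\<dots> = Tm hh tt X Y" unfolding Tm_def
  proof (intro sum.cong refl)
    fix i j assume i: "i \<in> {..<length X}" and j: "j \<in> {..<length Y}"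
    have bQ: "base_arrow (X ! i) \<in> Q" using assms(3) i by (auto simp: arrs_def)
    show "(\<Sum>a\<in>Q. if X ! i = Star a \<and> Y ! j = Orig a
         then smul (eps X i * eps Y j) (basis (mkp (hh a) (rot X i @ rot Y j))) else 0) =
      (if is_star (X ! i) \<and> Y ! j = dual (X ! i)
     then smul (eps X i * eps Y j) (basis (mkp (dt hh tt (X ! i)) (rot X i @ rot Y j))) else 0)"
    proof (cases "X ! i")
      case (Orig b) thus ?thesis by simp
    next
      case (Star b)
      have "(\<Sum>a\<in>Q. if X ! i = Star a \<and> Y ! j = Orig a
         then smul (eps X i * eps Y j) (basis (mkp (hh a) (rot X i @ rot Y j))) else 0)
        = (\<Sum>a\<in>Q. if b = a then (if Y ! j = Orig b then smul (eps X i * eps Y j) (basis (mkp (hh b) (rot X i @ rot Y j))) else 0) else 0)"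
        using Star by (intro sum.cong refl) auto
      thus ?thesis using Star bQ assms(4) by simp
    qed
  qed
  finally show ?thesis .
qed

lemma schouten_cyc: assumes "walk hh tt v v X" "walk hh tt u u Y" "arrs Q X" "arrs Q Y" "finite Q"
  shows "schouten Q hh tt r s (basis (mkp v X)) (basis (mkp u Y)) = Tm hh tt X Y - smul (sgnc ((r - 1) * (s - 1))) (Tm hh tt Y X)"
  unfolding schouten_eq sum_subtractf Tm_eq[OF assms(1,2,3,5)] smul_sum[symmetric] Tm_eq[OF assms(2,1,4,5)] ..

definition kap :: "int \<Rightarrow> int \<Rightarrow> 'a darrow list \<Rightarrow> nat \<Rightarrow> 'a darrow list \<Rightarrow> nat \<Rightarrow> complex" where
  "kap r s X i Y j = eps X i * eps Y j * (if is_star (X ! i) then 1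
     else - sgnc ((r - 1) * (s - 1)) * sgnc (int (nstars (rot X i)) * int (nstars (rot Y j))))"

definition Nb :: "('a \<Rightarrow> 'v) \<Rightarrow> ('a \<Rightarrow> 'v) \<Rightarrow> int \<Rightarrow> int \<Rightarrow> 'a darrow list \<Rightarrow> 'a darrow list \<Rightarrow> ('v,'a) elt" where
  "Nb hh tt r s X Y = (\<Sum>i<length X. \<Sum>j<length Y. if Y ! j = dual (X ! i)
     then smul (kap r s X i Y j) (basis (mkp (dt hh tt (X ! i)) (rot X i @ rot Y j))) else 0)"

lemma smul_if: "smul c (if b then f else 0) = (if b then smul c f else 0)" by simp

lemma schouten_N: assumes wX: "walk hh tt v v X" and wY: "walk hh tt u u Y" and aX: "arrs Q X" and aY: "arrs Q Y"
  and fQ: "finite Q"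
  shows "schouten Q hh tt r s (basis (mkp v X)) (basis (mkp u Y)) - Nb hh tt r s X Y \<in> relspan I Q hh tt"
proof -
  let ?s = "sgnc ((r - 1) * (s - 1))"
  let ?C = "\<lambda>i j. \<not> is_star (X ! i) \<and> Y ! j = dual (X ! i)"
  let ?b1 = "\<lambda>i j. basis (mkp (dt hh tt (Y ! j)) (rot Y j @ rot X i))"
  let ?b2 = "\<lambda>i j. basis (mkp (dt hh tt (X ! i)) (rot X i @ rot Y j))"
  define NS where "NS = (\<Sum>i<length X. \<Sum>j<length Y. if ?C i j then smul (kap r s X i Y j) (?b2 i j) else 0)"
  have split: "Nb hh tt r s X Y = Tm hh tt X Y + NS"
    unfolding Nb_def Tm_def NS_def sum.distrib[symmetric]
    by (intro sum.cong refl) (auto simp: kap_def)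
  have TYX: "smul ?s (Tm hh tt Y X) = (\<Sum>i<length X. \<Sum>j<length Y. if ?C i j then smul (?s * (eps Y j * eps X i)) (?b1 i j) else 0)"
    unfolding Tm_def smul_sum
    by (subst sum.swap) (intro sum.cong refl, auto simp: smul_smul dual_eq_iff)
  have "schouten Q hh tt r s (basis (mkp v X)) (basis (mkp u Y)) - Nb hh tt r s X Y
      = - (smul ?s (Tm hh tt Y X) + NS)"
    unfolding schouten_cyc[OF wX wY aX aY fQ] split by simp
  also have "smul ?s (Tm hh tt Y X) + NS = (\<Sum>i<length X. \<Sum>j<length Y. if ?C i j then
      smul (?s * (eps Y j * eps X i)) (?b1 i j) + smul (kap r s X i Y j) (?b2 i j) else 0)"
    unfolding TYX NS_def sum.distrib[symmetric] by (intro sum.cong refl) auto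
  finally have eq: "schouten Q hh tt r s (basis (mkp v X)) (basis (mkp u Y)) - Nb hh tt r s X Y = - \<dots>" .
  have "(\<Sum>i<length X. \<Sum>j<length Y. if ?C i j then
      smul (?s * (eps Y j * eps X i)) (?b1 i j) + smul (kap r s X i Y j) (?b2 i j) else 0) \<in> relspan I Q hh tt"
  proof (intro rs_sum)
    fix i j assume i: "i \<in> {..<length X}" and j: "j \<in> {..<length Y}"
    show "(if ?C i j then smul (?s * (eps Y j * eps X i)) (?b1 i j) + smul (kap r s X i Y j) (?b2 i j) else 0) \<in> relspan I Q hh tt"
    proof (cases "?C i j")
      case True
      have w1: "walk hh tt (dt hh tt (X ! i)) (dh hh tt (X ! i)) (rot X i)" using walk_rot[OF wX] i by simp
      have w2: "walk hh tt (dt hh tt (Y ! j)) (dh hh tt (Y ! j)) (rot Y j)" using walk_rot[OF wY] j by simp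
      have W1: "walk hh tt (dt hh tt (Y ! j)) (dt hh tt (Y ! j)) (rot Y j @ rot X i)"
        using w1 w2 True by (auto simp: walk_append)
      have W2: "walk hh tt (dt hh tt (X ! i)) (dt hh tt (X ! i)) (rot X i @ rot Y j)"
        using w1 w2 True by (auto simp: walk_append)
      have ar: "arrs Q (rot Y j @ rot X i)" using aX aY by (simp add: arrs_rot)
      have ab: "rot Y j @ rot X i = [] \<Longrightarrow> dt hh tt (Y ! j) = dt hh tt (X ! i)"
        using w1 True by simp
      have R: "smul (?s * (eps Y j * eps X i)) (?b1 i j) - smul (?s * (eps Y j * eps X i) * sgnc (int (nstars (rot Y j)) * int (nstars (rot X i)))) (?b2 i j) \<in> relspan I Q hh tt"
        by (rule rel_rot[OF W1 W2 ar ab])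
      have "smul (?s * (eps Y j * eps X i)) (?b1 i j) + smul (kap r s X i Y j) (?b2 i j)
         = smul (?s * (eps Y j * eps X i)) (?b1 i j) - smul (?s * (eps Y j * eps X i) * sgnc (int (nstars (rot Y j)) * int (nstars (rot X i)))) (?b2 i j)"
        using True by (simp add: kap_def fun_eq_iff algebra_simps)
      thus ?thesis using True R by simp
    next
      case False thus ?thesis by (subst if_not_P[OF False]) simp
    qed
  qed
  thus ?thesis unfolding eq by (rule rs_uminus)
qed



lemma rot_mid: "rot (A @ x # B) (length A) = B @ A" by (simp add: rot_def)
lemma eps_mid: "eps (A @ x # B) (length A) = sgnc (int (nstars B) * int (nstars A + nstars [x]))"
  by (simp add: eps_def)

definition bwd :: "nat \<Rightarrow> nat \<Rightarrow> nat \<Rightarrow> nat" where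
  "bwd n j j' = (if j < j' then j' - Suc j else n - Suc j + j')"

definition sg :: "'a darrow \<Rightarrow> nat" where "sg x = (if is_star x then 1 else 0)"
lemma nstars_single: "nstars [x] = sg x" by (simp add: sg_def)

lemma neg_sgnc: "- (c::complex) = sgnc 1 * c" by (simp add: sgnc_def)
lemma sgnc_mult2: "sgnc a * (sgnc b * c) = sgnc (a + b) * c" by (simp add: sgnc_add)

definition term1 where
  "term1 hh tt X Y Z i j j' k = (let W = rot Y j @ rot Z k; p = bwd (length Y) j j' in
     smul (sgnc ((int (nstars X) - 1) * (int (nstars Z) - 1)) * kap (int (nstars Y)) (int (nstars Z)) Y j Z k
        * kap (int (nstars X)) (int (nstars Y) + int (nstars Z) - 1) X i W p)
      (basis (mkp (dt hh tt (X ! i)) (rot X i @ rot W p))))"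

definition term2 where
  "term2 hh tt X Y Z i j j' k = (let W = rot X i @ rot Y j'; p = length (rot X i) + bwd (length Y) j' j in
     smul (sgnc ((int (nstars Z) - 1) * (int (nstars Y) - 1)) * kap (int (nstars X)) (int (nstars Y)) X i Y j'
        * kap (int (nstars Z)) (int (nstars X) + int (nstars Y) - 1) Z k W p)
      (basis (mkp (dt hh tt (Z ! k)) (rot Z k @ rot W p))))"

lemma pairA:
  fixes X1 X2 Y1 Y2 Y3 Z1 Z2 :: "'a darrow list"
  assumes wX: "walk hh tt vx vx (X1 @ x # X2)" and wY: "walk hh tt vy vy (Y1 @ y # Y2 @ y' # Y3)"
    and wZ: "walk hh tt vz vz (Z1 @ z # Z2)"
    and aX: "arrs Q (X1 @ x # X2)" and aY: "arrs Q (Y1 @ y # Y2 @ y' # Y3)" and aZ: "arrs Q (Z1 @ z # Z2)"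
    and d1: "y' = dual x" and d2: "z = dual y"
  shows "term1 hh tt (X1 @ x # X2) (Y1 @ y # Y2 @ y' # Y3) (Z1 @ z # Z2) (length X1) (length Y1) (length Y1 + Suc (length Y2)) (length Z1)
       + term2 hh tt (X1 @ x # X2) (Y1 @ y # Y2 @ y' # Y3) (Z1 @ z # Z2) (length X1) (length Y1) (length Y1 + Suc (length Y2)) (length Z1)
       \<in> relspan I Q hh tt"
proof -
  let ?X = "X1 @ x # X2" and ?Y = "Y1 @ y # Y2 @ y' # Y3" and ?Z = "Z1 @ z # Z2"
  have rX: "rot ?X (length X1) = X2 @ X1" by (rule rot_mid)
  have rZ: "rot ?Z (length Z1) = Z2 @ Z1" by (rule rot_mid)
  have rY1: "rot ?Y (length Y1) = Y2 @ y' # Y3 @ Y1" by (simp add: rot_mid)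
  have rY2: "rot ?Y (length Y1 + Suc (length Y2)) = Y3 @ Y1 @ y # Y2"
    using rot_mid[of "Y1 @ y # Y2" y' Y3] by simp
  have b1: "bwd (length ?Y) (length Y1) (length Y1 + Suc (length Y2)) = length Y2" by (simp add: bwd_def)
  have b2: "bwd (length ?Y) (length Y1 + Suc (length Y2)) (length Y1) = length Y3 + length Y1" by (simp add: bwd_def)
  have W1: "rot (Y2 @ y' # Y3 @ Y1 @ Z2 @ Z1) (length Y2) = (Y3 @ Y1 @ Z2 @ Z1) @ Y2" by (simp add: rot_mid)
  have W2: "rot ((X2 @ X1 @ Y3 @ Y1) @ y # Y2) (length (X2 @ X1 @ Y3 @ Y1)) = Y2 @ X2 @ X1 @ Y3 @ Y1" by (rule rot_mid)
  have eX: "eps ?X (length X1) = sgnc (int (nstars X2) * int (nstars X1 + nstars [x]))" by (rule eps_mid)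
  have eZ: "eps ?Z (length Z1) = sgnc (int (nstars Z2) * int (nstars Z1 + nstars [z]))" by (rule eps_mid)
  have eY1: "eps ?Y (length Y1) = sgnc (int (nstars (Y2 @ y' # Y3)) * int (nstars Y1 + nstars [y]))" by (rule eps_mid)
  have eY2: "eps ?Y (length Y1 + Suc (length Y2)) = sgnc (int (nstars Y3) * int (nstars (Y1 @ y # Y2) + nstars [y']))"
    using eps_mid[of "Y1 @ y # Y2" y' Y3] by simp
  have eW1: "eps (Y2 @ y' # Y3 @ Y1 @ Z2 @ Z1) (length Y2) = sgnc (int (nstars (Y3 @ Y1 @ Z2 @ Z1)) * int (nstars Y2 + nstars [y']))"
    by (rule eps_mid)
  have eW2: "eps ((X2 @ X1 @ Y3 @ Y1) @ y # Y2) (length (X2 @ X1 @ Y3 @ Y1)) = sgnc (int (nstars Y2) * int (nstars (X2 @ X1 @ Y3 @ Y1) + nstars [y]))"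
    by (rule eps_mid)
  have nY1: "(?Y) ! length Y1 = y" by simp
  have nY2: "(?Y) ! (length Y1 + Suc (length Y2)) = y'" by (simp add: nth_append)
  have nW1: "(Y2 @ y' # Y3 @ Y1 @ Z2 @ Z1) ! length Y2 = y'" by simp
  have nW2: "((X2 @ X1 @ Y3 @ Y1) @ y # Y2) ! length (X2 @ X1 @ Y3 @ Y1) = y" by (rule nth_append_length)
  define c where "c = sgnc ((int (nstars ?X) - 1) * (int (nstars ?Z) - 1)) * kap (int (nstars ?Y)) (int (nstars ?Z)) ?Y (length Y1) ?Z (length Z1)
        * kap (int (nstars ?X)) (int (nstars ?Y) + int (nstars ?Z) - 1) ?X (length X1) (Y2 @ y' # Y3 @ Y1 @ Z2 @ Z1) (length Y2)"
  define c2 where "c2 = sgnc ((int (nstars ?Z) - 1) * (int (nstars ?Y) - 1)) * kap (int (nstars ?X)) (int (nstars ?Y)) ?X (length X1) ?Y (length Y1 + Suc (length Y2))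
        * kap (int (nstars ?Z)) (int (nstars ?X) + int (nstars ?Y) - 1) ?Z (length Z1) ((X2 @ X1 @ Y3 @ Y1) @ y # Y2) (length (X2 @ X1 @ Y3 @ Y1))"
  have t1: "term1 hh tt ?X ?Y ?Z (length X1) (length Y1) (length Y1 + Suc (length Y2)) (length Z1)
     = smul c (basis (mkp (dt hh tt x) ((X2 @ X1 @ Y3 @ Y1) @ (Z2 @ Z1 @ Y2))))"
    unfolding term1_def Let_def b1 rY1 rZ c_def
    by (simp add: W1[simplified] rX del: nstars_append)
  have t2: "term2 hh tt ?X ?Y ?Z (length X1) (length Y1) (length Y1 + Suc (length Y2)) (length Z1)
     = smul c2 (basis (mkp (dt hh tt z) ((Z2 @ Z1 @ Y2) @ (X2 @ X1 @ Y3 @ Y1))))"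
    unfolding term2_def Let_def b2 rY2 rZ rX c2_def
    by (simp add: W2[simplified] add.assoc del: nstars_append)
  have sgn: "c2 = - (c * sgnc (int (nstars (X2 @ X1 @ Y3 @ Y1)) * int (nstars (Z2 @ Z1 @ Y2))))"
  proof -
    have hy: "is_star y' = (\<not> is_star x)" "is_star z = (\<not> is_star y)" using d1 d2 by auto
    show ?thesis
    unfolding c_def c2_def kap_def rX rZ rY1 rY2 eX eZ eY1 eY2 eW1 eW2 nY1 nY2 nW1 nW2 W1 W2
    apply (cases "is_star x"; cases "is_star y")
    apply (simp_all add: hy nstars_single sg_def neg_sgnc sgnc_mult sgnc_mult2 sgnc_eq_iff even_add even_mult_iff)
    apply argo+
    done
  qed
  have wa: "walk hh tt u w (A @ B)" if "walk hh tt u m A" "walk hh tt m w B" for u m w A B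
    using that by (auto simp: walk_append)
  from wX obtain m1 where x1: "walk hh tt vx m1 X1" and x2: "walk hh tt m1 vx (x # X2)"
    by (auto simp: walk_append)
  from x2 have hx: "dh hh tt x = m1" and x3: "walk hh tt (dt hh tt x) vx X2" by auto
  from wY obtain m2 where y1: "walk hh tt vy m2 Y1" and y2: "walk hh tt m2 vy (y # Y2 @ y' # Y3)"
    by (auto simp: walk_append)
  from y2 have hy: "dh hh tt y = m2" and y3: "walk hh tt (dt hh tt y) vy (Y2 @ y' # Y3)" by auto
  from y3 obtain m3 where y4: "walk hh tt (dt hh tt y) m3 Y2" and y5: "walk hh tt m3 vy (y' # Y3)"
    by (auto simp: walk_append)
  from y5 have hy': "dh hh tt y' = m3" and y6: "walk hh tt (dt hh tt y') vy Y3" by auto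
  from wZ obtain m4 where z1: "walk hh tt vz m4 Z1" and z2: "walk hh tt m4 vz (z # Z2)"
    by (auto simp: walk_append)
  from z2 have hz: "dh hh tt z = m4" and z3: "walk hh tt (dt hh tt z) vz Z2" by auto
  have dxy: "dt hh tt y' = dh hh tt x" "dh hh tt y' = dt hh tt x" "dt hh tt z = dh hh tt y" "dh hh tt z = dt hh tt y"
    using d1 d2 by auto
  have wP: "walk hh tt (dt hh tt x) (dh hh tt y) (X2 @ X1 @ Y3 @ Y1)"
    by (intro wa[OF x3] wa[OF x1[unfolded hx[symmetric]]] wa[OF y6[unfolded dxy(1)]]) (use y1 hy in simp)
  have wR: "walk hh tt (dh hh tt y) (dt hh tt x) (Z2 @ Z1 @ Y2)"
    by (intro wa[OF z3[unfolded dxy(3)]] wa[OF z1[unfolded hz[symmetric] dxy(4)]]) (use y4 hy' dxy(2) in simp)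
  have w1: "walk hh tt (dt hh tt x) (dt hh tt x) ((X2 @ X1 @ Y3 @ Y1) @ (Z2 @ Z1 @ Y2))" by (rule wa[OF wP wR])
  have w2: "walk hh tt (dt hh tt z) (dt hh tt z) ((Z2 @ Z1 @ Y2) @ (X2 @ X1 @ Y3 @ Y1))"
    unfolding dxy(3) by (rule wa[OF wR wP])
  have ar: "arrs Q ((X2 @ X1 @ Y3 @ Y1) @ (Z2 @ Z1 @ Y2))" using aX aY aZ by (auto simp: arrs_def)
  have ab: "(X2 @ X1 @ Y3 @ Y1) @ (Z2 @ Z1 @ Y2) = [] \<Longrightarrow> dt hh tt x = dt hh tt z"
    using wR dxy(3) by auto
  have R: "smul c (basis (mkp (dt hh tt x) ((X2 @ X1 @ Y3 @ Y1) @ (Z2 @ Z1 @ Y2)))) -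
     smul (c * sgnc (int (nstars (X2 @ X1 @ Y3 @ Y1)) * int (nstars (Z2 @ Z1 @ Y2))))
      (basis (mkp (dt hh tt z) ((Z2 @ Z1 @ Y2) @ (X2 @ X1 @ Y3 @ Y1)))) \<in> relspan I Q hh tt"
    by (rule rel_rot[OF w1 w2 ar ab])
  have sm: "smul (- a) f = - smul a f" for a f by (simp add: fun_eq_iff)
  show ?thesis unfolding t1 t2 sgn sm using R by (simp only: diff_conv_add_uminus)
qed

lemma pairB:
  fixes X1 X2 Y1 Y2 Y3 Z1 Z2 :: "'a darrow list"
  assumes wX: "walk hh tt vx vx (X1 @ x # X2)" and wY: "walk hh tt vy vy (Y1 @ y' # Y2 @ y # Y3)"
    and wZ: "walk hh tt vz vz (Z1 @ z # Z2)"
    and aX: "arrs Q (X1 @ x # X2)" and aY: "arrs Q (Y1 @ y' # Y2 @ y # Y3)" and aZ: "arrs Q (Z1 @ z # Z2)"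
    and d1: "y' = dual x" and d2: "z = dual y"
  shows "term1 hh tt (X1 @ x # X2) (Y1 @ y' # Y2 @ y # Y3) (Z1 @ z # Z2) (length X1) (length Y1 + Suc (length Y2)) (length Y1) (length Z1)
       + term2 hh tt (X1 @ x # X2) (Y1 @ y' # Y2 @ y # Y3) (Z1 @ z # Z2) (length X1) (length Y1 + Suc (length Y2)) (length Y1) (length Z1)
       \<in> relspan I Q hh tt"
proof -
  let ?X = "X1 @ x # X2" and ?Y = "Y1 @ y' # Y2 @ y # Y3" and ?Z = "Z1 @ z # Z2"
  have rX: "rot ?X (length X1) = X2 @ X1" by (rule rot_mid)
  have rZ: "rot ?Z (length Z1) = Z2 @ Z1" by (rule rot_mid)
  have rY1: "rot ?Y (length Y1) = Y2 @ y # Y3 @ Y1" by (simp add: rot_mid)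
  have rY2: "rot ?Y (length Y1 + Suc (length Y2)) = Y3 @ Y1 @ y' # Y2"
    using rot_mid[of "Y1 @ y' # Y2" y Y3] by simp
  have b1: "bwd (length ?Y) (length Y1 + Suc (length Y2)) (length Y1) = length Y3 + length Y1" by (simp add: bwd_def)
  have b2: "bwd (length ?Y) (length Y1) (length Y1 + Suc (length Y2)) = length Y2" by (simp add: bwd_def)
  have W1: "rot ((Y3 @ Y1) @ y' # Y2 @ Z2 @ Z1) (length (Y3 @ Y1)) = (Y2 @ Z2 @ Z1) @ Y3 @ Y1" by (rule rot_mid)
  have W2: "rot ((X2 @ X1 @ Y2) @ y # Y3 @ Y1) (length (X2 @ X1 @ Y2)) = (Y3 @ Y1) @ X2 @ X1 @ Y2" by (rule rot_mid)
  have eX: "eps ?X (length X1) = sgnc (int (nstars X2) * int (nstars X1 + nstars [x]))" by (rule eps_mid)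
  have eZ: "eps ?Z (length Z1) = sgnc (int (nstars Z2) * int (nstars Z1 + nstars [z]))" by (rule eps_mid)
  have eY1: "eps ?Y (length Y1) = sgnc (int (nstars (Y2 @ y # Y3)) * int (nstars Y1 + nstars [y']))" by (rule eps_mid)
  have eY2: "eps ?Y (length Y1 + Suc (length Y2)) = sgnc (int (nstars Y3) * int (nstars (Y1 @ y' # Y2) + nstars [y]))"
    using eps_mid[of "Y1 @ y' # Y2" y Y3] by simp
  have eW1: "eps ((Y3 @ Y1) @ y' # Y2 @ Z2 @ Z1) (length (Y3 @ Y1)) = sgnc (int (nstars (Y2 @ Z2 @ Z1)) * int (nstars (Y3 @ Y1) + nstars [y']))"
    by (rule eps_mid)
  have eW2: "eps ((X2 @ X1 @ Y2) @ y # Y3 @ Y1) (length (X2 @ X1 @ Y2)) = sgnc (int (nstars (Y3 @ Y1)) * int (nstars (X2 @ X1 @ Y2) + nstars [y]))"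
    by (rule eps_mid)
  have nY1: "(?Y) ! length Y1 = y'" by simp
  have nY2: "(?Y) ! (length Y1 + Suc (length Y2)) = y" by (simp add: nth_append)
  have nW1: "((Y3 @ Y1) @ y' # Y2 @ Z2 @ Z1) ! length (Y3 @ Y1) = y'" by (rule nth_append_length)
  have nW2: "((X2 @ X1 @ Y2) @ y # Y3 @ Y1) ! length (X2 @ X1 @ Y2) = y" by (rule nth_append_length)
  define c where "c = sgnc ((int (nstars ?X) - 1) * (int (nstars ?Z) - 1)) * kap (int (nstars ?Y)) (int (nstars ?Z)) ?Y (length Y1 + Suc (length Y2)) ?Z (length Z1)
        * kap (int (nstars ?X)) (int (nstars ?Y) + int (nstars ?Z) - 1) ?X (length X1) ((Y3 @ Y1) @ y' # Y2 @ Z2 @ Z1) (length (Y3 @ Y1))"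
  define c2 where "c2 = sgnc ((int (nstars ?Z) - 1) * (int (nstars ?Y) - 1)) * kap (int (nstars ?X)) (int (nstars ?Y)) ?X (length X1) ?Y (length Y1)
        * kap (int (nstars ?Z)) (int (nstars ?X) + int (nstars ?Y) - 1) ?Z (length Z1) ((X2 @ X1 @ Y2) @ y # Y3 @ Y1) (length (X2 @ X1 @ Y2))"
  have t1: "term1 hh tt ?X ?Y ?Z (length X1) (length Y1 + Suc (length Y2)) (length Y1) (length Z1)
     = smul c (basis (mkp (dt hh tt x) ((X2 @ X1 @ Y2) @ (Z2 @ Z1 @ Y3 @ Y1))))"
    unfolding term1_def Let_def b1 rY2 rZ c_def
    by (simp add: W1[simplified] rX add.assoc del: nstars_append)
  have t2: "term2 hh tt ?X ?Y ?Z (length X1) (length Y1 + Suc (length Y2)) (length Y1) (length Z1)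
     = smul c2 (basis (mkp (dt hh tt z) ((Z2 @ Z1 @ Y3 @ Y1) @ (X2 @ X1 @ Y2))))"
    unfolding term2_def Let_def b2 rY1 rZ rX c2_def
    by (simp add: W2[simplified] add.assoc del: nstars_append)
  have sgn: "c2 = - (c * sgnc (int (nstars (X2 @ X1 @ Y2)) * int (nstars (Z2 @ Z1 @ Y3 @ Y1))))"
  proof -
    have hy: "is_star y' = (\<not> is_star x)" "is_star z = (\<not> is_star y)" using d1 d2 by auto
    show ?thesis
    unfolding c_def c2_def kap_def rX rZ rY1 rY2 eX eZ eY1 eY2 eW1 eW2 nY1 nY2 nW1 nW2 W1 W2
    apply (cases "is_star x"; cases "is_star y")
    apply (simp_all add: hy nstars_single sg_def neg_sgnc sgnc_mult sgnc_mult2 sgnc_eq_iff even_add even_mult_iff)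
    apply argo+
    done
  qed
  have wa: "walk hh tt u w (A @ B)" if "walk hh tt u m A" "walk hh tt m w B" for u m w A B
    using that by (auto simp: walk_append)
  from wX obtain m1 where x1: "walk hh tt vx m1 X1" and x2: "walk hh tt m1 vx (x # X2)"
    by (auto simp: walk_append)
  from x2 have hx: "dh hh tt x = m1" and x3: "walk hh tt (dt hh tt x) vx X2" by auto
  from wY obtain m2 where y1: "walk hh tt vy m2 Y1" and y2: "walk hh tt m2 vy (y' # Y2 @ y # Y3)"
    by (auto simp: walk_append)
  from y2 have hy': "dh hh tt y' = m2" and y3: "walk hh tt (dt hh tt y') vy (Y2 @ y # Y3)" by auto
  from y3 obtain m3 where y4: "walk hh tt (dt hh tt y') m3 Y2" and y5: "walk hh tt m3 vy (y # Y3)"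
    by (auto simp: walk_append)
  from y5 have hy: "dh hh tt y = m3" and y6: "walk hh tt (dt hh tt y) vy Y3" by auto
  from wZ obtain m4 where z1: "walk hh tt vz m4 Z1" and z2: "walk hh tt m4 vz (z # Z2)"
    by (auto simp: walk_append)
  from z2 have hz: "dh hh tt z = m4" and z3: "walk hh tt (dt hh tt z) vz Z2" by auto
  have dxy: "dt hh tt y' = dh hh tt x" "dh hh tt y' = dt hh tt x" "dt hh tt z = dh hh tt y" "dh hh tt z = dt hh tt y"
    using d1 d2 by auto
  have wP: "walk hh tt (dt hh tt x) (dh hh tt y) (X2 @ X1 @ Y2)"
    by (intro wa[OF x3] wa[OF x1[unfolded hx[symmetric]]]) (use y4 hy dxy(1) in simp)
  have wR: "walk hh tt (dh hh tt y) (dt hh tt x) (Z2 @ Z1 @ Y3 @ Y1)"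
    by (intro wa[OF z3[unfolded dxy(3)]] wa[OF z1[unfolded hz[symmetric] dxy(4)]] wa[OF y6]) (use y1 hy' dxy(2) in simp)
  have w1: "walk hh tt (dt hh tt x) (dt hh tt x) ((X2 @ X1 @ Y2) @ (Z2 @ Z1 @ Y3 @ Y1))" by (rule wa[OF wP wR])
  have w2: "walk hh tt (dt hh tt z) (dt hh tt z) ((Z2 @ Z1 @ Y3 @ Y1) @ (X2 @ X1 @ Y2))"
    unfolding dxy(3) by (rule wa[OF wR wP])
  have ar: "arrs Q ((X2 @ X1 @ Y2) @ (Z2 @ Z1 @ Y3 @ Y1))" using aX aY aZ by (auto simp: arrs_def)
  have ab: "(X2 @ X1 @ Y2) @ (Z2 @ Z1 @ Y3 @ Y1) = [] \<Longrightarrow> dt hh tt x = dt hh tt z"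
    using wR dxy(3) by auto
  have R: "smul c (basis (mkp (dt hh tt x) ((X2 @ X1 @ Y2) @ (Z2 @ Z1 @ Y3 @ Y1)))) -
     smul (c * sgnc (int (nstars (X2 @ X1 @ Y2)) * int (nstars (Z2 @ Z1 @ Y3 @ Y1))))
      (basis (mkp (dt hh tt z) ((Z2 @ Z1 @ Y3 @ Y1) @ (X2 @ X1 @ Y2)))) \<in> relspan I Q hh tt"
    by (rule rel_rot[OF w1 w2 ar ab])
  have sm: "smul (- a) f = - smul a f" for a f by (simp add: fun_eq_iff)
  show ?thesis unfolding t1 t2 sgn sm using R by (simp only: diff_conv_add_uminus)
qed

lemma decomp1: assumes "i < length X" obtains X1 x X2 where "X = X1 @ x # X2" "i = length X1" "x = X ! i"
proof -
  have "X = take i X @ X ! i # drop (Suc i) X" using assms by (simp add: id_take_nth_drop)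
  moreover have "i = length (take i X)" using assms by simp
  ultimately show ?thesis using that by blast
qed

lemma decomp2: assumes "j < j'" "j' < length Y"
  obtains Y1 y Y2 y' Y3 where "Y = Y1 @ y # Y2 @ y' # Y3" "j = length Y1" "j' = length Y1 + Suc (length Y2)"
    "y = Y ! j" "y' = Y ! j'"
proof -
  let ?D = "drop (Suc j) Y" and ?m = "j' - Suc j"
  have e1: "Y = take j Y @ Y ! j # ?D" using assms by (simp add: id_take_nth_drop)
  have e2: "?D = take ?m ?D @ drop ?m ?D" by (rule append_take_drop_id[symmetric])
  have e3: "drop ?m ?D = Y ! j' # drop (Suc j') Y" using assms by (simp add: Cons_nth_drop_Suc)
  have "Y = take j Y @ Y ! j # take ?m ?D @ Y ! j' # drop (Suc j') Y"
    using e1 e2 e3 by (metis append.assoc)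
  moreover have "j = length (take j Y)" "j' = length (take j Y) + Suc (length (take ?m ?D))" using assms by auto
  ultimately show ?thesis using that by blast
qed

lemma pair: assumes wX: "walk hh tt vx vx X" and wY: "walk hh tt vy vy Y" and wZ: "walk hh tt vz vz Z"
    and aX: "arrs Q X" and aY: "arrs Q Y" and aZ: "arrs Q Z"
    and i: "i < length X" and j: "j < length Y" and j': "j' < length Y" and jj: "j \<noteq> j'" and k: "k < length Z"
    and d1: "Y ! j' = dual (X ! i)" and d2: "Z ! k = dual (Y ! j)"
  shows "term1 hh tt X Y Z i j j' k + term2 hh tt X Y Z i j j' k \<in> relspan I Q hh tt"
proof -
  obtain X1 x X2 where eX: "X = X1 @ x # X2" "i = length X1" "x = X ! i" using decomp1[OF i] by blast
  obtain Z1 z Z2 where eZ: "Z = Z1 @ z # Z2" "k = length Z1" "z = Z ! k" using decomp1[OF k] by blast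
  show ?thesis
  proof (cases "j < j'")
    case True
    obtain Y1 y Y2 y' Y3 where eY: "Y = Y1 @ y # Y2 @ y' # Y3" "j = length Y1" "j' = length Y1 + Suc (length Y2)"
      "y = Y ! j" "y' = Y ! j'" using decomp2[OF True j'] by blast
    have "y' = dual x" "z = dual y" using d1 d2 eX(3) eY(4,5) eZ(3) by simp_all
    from pairA[OF wX[unfolded eX(1)] wY[unfolded eY(1)] wZ[unfolded eZ(1)] aX[unfolded eX(1)] aY[unfolded eY(1)] aZ[unfolded eZ(1)] this]
    show ?thesis unfolding eX(1,2) eY(1,2,3) eZ(1,2) .
  next
    case False
    hence lt: "j' < j" using jj by simp
    obtain Y1 y' Y2 y Y3 where eY: "Y = Y1 @ y' # Y2 @ y # Y3" "j' = length Y1" "j = length Y1 + Suc (length Y2)"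
      "y' = Y ! j'" "y = Y ! j" using decomp2[OF lt j] by blast
    have "y' = dual x" "z = dual y" using d1 d2 eX(3) eY(4,5) eZ(3) by simp_all
    from pairB[OF wX[unfolded eX(1)] wY[unfolded eY(1)] wZ[unfolded eZ(1)] aX[unfolded eX(1)] aY[unfolded eY(1)] aZ[unfolded eZ(1)] this]
    show ?thesis unfolding eX(1,2) eY(1,2,3) eZ(1,2) .
  qed
qed



lemma fs_Nb[simp]: "fs (Nb hh tt r s X Y)" by (simp add: Nb_def)

lemma schouten_if_right: "schouten Q hh tt r s g (if c then f else 0) = (if c then schouten Q hh tt r s g f else 0)"
  by simp

lemma walk_W: assumes "walk hh tt vy vy Y" "walk hh tt vz vz Z" "j < length Y" "k < length Z" "Z ! k = dual (Y ! j)"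
  shows "walk hh tt (dt hh tt (Y ! j)) (dt hh tt (Y ! j)) (rot Y j @ rot Z k)"
proof -
  have w1: "walk hh tt (dt hh tt (Y ! j)) (dh hh tt (Y ! j)) (rot Y j)" using walk_rot[OF assms(1,3)] .
  have w2: "walk hh tt (dt hh tt (Z ! k)) (dh hh tt (Z ! k)) (rot Z k)" using walk_rot[OF assms(2,4)] .
  show ?thesis using w1 w2 assms(5) by (auto simp: walk_append)
qed

definition Mb where
  "Mb hh tt X Y Z = (\<Sum>j<length Y. \<Sum>k<length Z. if Z ! k = dual (Y ! j) then
     smul (kap (int (nstars Y)) (int (nstars Z)) Y j Z k)
       (Nb hh tt (int (nstars X)) (int (nstars Y) + int (nstars Z) - 1) X (rot Y j @ rot Z k)) else 0)"

lemma nest: assumes wX: "walk hh tt vx vx X" and wY: "walk hh tt vy vy Y" and wZ: "walk hh tt vz vz Z"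
    and aX: "arrs Q X" and aY: "arrs Q Y" and aZ: "arrs Q Z" and fQ: "finite Q"
  shows "schouten Q hh tt (int (nstars X)) (int (nstars Y) + int (nstars Z) - 1) (basis (mkp vx X))
      (schouten Q hh tt (int (nstars Y)) (int (nstars Z)) (basis (mkp vy Y)) (basis (mkp vz Z))) - Mb hh tt X Y Z
    \<in> relspan I Q hh tt"
proof -
  let ?r = "int (nstars X)" and ?s = "int (nstars Y)" and ?t = "int (nstars Z)"
  let ?u = "?s + ?t - 1"
  let ?bX = "basis (mkp vx X)"
  define rho where "rho = schouten Q hh tt ?s ?t (basis (mkp vy Y)) (basis (mkp vz Z)) - Nb hh tt ?s ?t Y Z"
  have rho: "rho \<in> relspan I Q hh tt" unfolding rho_def by (rule schouten_N[OF wY wZ aY aZ fQ])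
  have frho: "fs rho" using relspan_Dw[OF rho] by simp
  have e0: "schouten Q hh tt ?s ?t (basis (mkp vy Y)) (basis (mkp vz Z)) = Nb hh tt ?s ?t Y Z + rho"
    unfolding rho_def by simp
  have "schouten Q hh tt ?r ?u ?bX (schouten Q hh tt ?s ?t (basis (mkp vy Y)) (basis (mkp vz Z)))
     = schouten Q hh tt ?r ?u ?bX (Nb hh tt ?s ?t Y Z)"
    unfolding e0 using frho by (simp add: schouten_add_right schouten_rs_right[OF rho])
  also have "\<dots> = (\<Sum>j<length Y. \<Sum>k<length Z. if Z ! k = dual (Y ! j) then
     smul (kap ?s ?t Y j Z k) (schouten Q hh tt ?r ?u ?bX (basis (mkp (dt hh tt (Y ! j)) (rot Y j @ rot Z k)))) else 0)"
    unfolding Nb_def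
    by (simp add: schouten_sum_right schouten_if_right) (intro sum.cong refl, simp add: schouten_smul_right[where f="basis _"])
  finally have e1: "schouten Q hh tt ?r ?u ?bX (schouten Q hh tt ?s ?t (basis (mkp vy Y)) (basis (mkp vz Z))) = \<dots>" .
  have "(\<Sum>j<length Y. \<Sum>k<length Z. if Z ! k = dual (Y ! j) then
     smul (kap ?s ?t Y j Z k) (schouten Q hh tt ?r ?u ?bX (basis (mkp (dt hh tt (Y ! j)) (rot Y j @ rot Z k)))) else 0) - Mb hh tt X Y Z
    = (\<Sum>j<length Y. \<Sum>k<length Z. if Z ! k = dual (Y ! j) then
     smul (kap ?s ?t Y j Z k) (schouten Q hh tt ?r ?u ?bX (basis (mkp (dt hh tt (Y ! j)) (rot Y j @ rot Z k)))
        - Nb hh tt ?r ?u X (rot Y j @ rot Z k)) else 0)"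
    unfolding Mb_def sum_subtractf[symmetric] by (intro sum.cong refl) (auto simp: smul_diff)
  also have "\<dots> \<in> relspan I Q hh tt"
  proof (intro rs_sum)
    fix j k assume j: "j \<in> {..<length Y}" and k: "k \<in> {..<length Z}"
    show "(if Z ! k = dual (Y ! j) then
     smul (kap ?s ?t Y j Z k) (schouten Q hh tt ?r ?u ?bX (basis (mkp (dt hh tt (Y ! j)) (rot Y j @ rot Z k)))
        - Nb hh tt ?r ?u X (rot Y j @ rot Z k)) else 0) \<in> relspan I Q hh tt"
    proof (cases "Z ! k = dual (Y ! j)")
      case True
      have w: "walk hh tt (dt hh tt (Y ! j)) (dt hh tt (Y ! j)) (rot Y j @ rot Z k)"
        using walk_W[OF wY wZ _ _ True] j k by simp
      have a: "arrs Q (rot Y j @ rot Z k)" using aY aZ by (simp add: arrs_rot)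
      show ?thesis using True by (simp add: rs_smul schouten_N[OF wX w aX a fQ])
    next
      case False thus ?thesis by (subst if_not_P[OF False]) simp
    qed
  qed
  finally show ?thesis unfolding e1 .
qed

definition Fb where
  "Fb hh tt r u X W i p = (if W ! p = dual (X ! i) then
     smul (kap r u X i W p) (basis (mkp (dt hh tt (X ! i)) (rot X i @ rot W p))) else 0)"

definition M1 where
  "M1 hh tt X Y Z = (\<Sum>j<length Y. \<Sum>k<length Z. if Z ! k = dual (Y ! j) then
     smul (kap (int (nstars Y)) (int (nstars Z)) Y j Z k)
       (\<Sum>i<length X. \<Sum>p<length (rot Y j).
          Fb hh tt (int (nstars X)) (int (nstars Y) + int (nstars Z) - 1) X (rot Y j @ rot Z k) i p) else 0)"

definition M2 where
  "M2 hh tt X Y Z = (\<Sum>j<length Y. \<Sum>k<length Z. if Z ! k = dual (Y ! j) then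
     smul (kap (int (nstars Y)) (int (nstars Z)) Y j Z k)
       (\<Sum>i<length X. \<Sum>q<length (rot Z k).
          Fb hh tt (int (nstars X)) (int (nstars Y) + int (nstars Z) - 1) X (rot Y j @ rot Z k) i (length (rot Y j) + q)) else 0)"

lemma Mb_split: "Mb hh tt X Y Z = M1 hh tt X Y Z + M2 hh tt X Y Z"
  unfolding Mb_def M1_def M2_def Nb_def sum.distrib[symmetric]
  by (intro sum.cong refl) (auto simp: Fb_def[symmetric] sum_lessThan_add sum.distrib smul_add)

lemma length_rot: "j < length Y \<Longrightarrow> length (rot Y j) = length Y - 1"
  by (simp add: rot_def)

lemma rot_nth_bwd: assumes "j < length Y" "j' < length Y" "j' \<noteq> j"
  shows "rot Y j ! bwd (length Y) j j' = Y ! j'"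
  using assms by (auto simp: rot_def bwd_def nth_append)

lemma bwd_bij: assumes "j < n" shows "bij_betw (bwd n j) ({..<n} - {j}) {..<n - 1}"
proof (rule bij_betw_byWitness[where f'="\<lambda>p. if p < n - Suc j then Suc j + p else p - (n - Suc j)"])
  show "\<forall>a\<in>{..<n} - {j}. (if bwd n j a < n - Suc j then Suc j + bwd n j a else bwd n j a - (n - Suc j)) = a"
    using assms by (auto simp: bwd_def)
  show "\<forall>a'\<in>{..<n - 1}. bwd n j (if a' < n - Suc j then Suc j + a' else a' - (n - Suc j)) = a'"
    using assms by (auto simp: bwd_def)
  show "bwd n j ` ({..<n} - {j}) \<subseteq> {..<n - 1}"
    using assms by (auto simp: bwd_def)
  show "(\<lambda>p. if p < n - Suc j then Suc j + p else p - (n - Suc j)) ` {..<n - 1} \<subseteq> {..<n} - {j}"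
    using assms by auto
qed

lemma reidx: assumes "j < n"
  shows "(\<Sum>p<n - 1. F p) = (\<Sum>j'<n. if j' \<noteq> j then F (bwd n j j') else (0::'b::comm_monoid_add))"
proof -
  have "(\<Sum>j'<n. if j' \<noteq> j then F (bwd n j j') else 0) = (\<Sum>j'\<in>{..<n} - {j}. F (bwd n j j'))"
    by (rule sum.mono_neutral_cong_right) auto
  also have "\<dots> = (\<Sum>p<n - 1. F p)" by (rule sum.reindex_bij_betw[OF bwd_bij[OF assms]])
  finally show ?thesis by simp
qed

definition cond where
  "cond X Y Z i j j' k \<longleftrightarrow> j' \<noteq> j \<and> Y ! j' = dual (X ! i) \<and> Z ! k = dual (Y ! j)"

lemma L1: "smul (sgnc ((int (nstars X) - 1) * (int (nstars Z) - 1))) (M1 hh tt X Y Z)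
   = (\<Sum>i<length X. \<Sum>j<length Y. \<Sum>j'<length Y. \<Sum>k<length Z.
        if cond X Y Z i j j' k then term1 hh tt X Y Z i j j' k else 0)"
proof -
  let ?s = "sgnc ((int (nstars X) - 1) * (int (nstars Z) - 1))"
  let ?H = "\<lambda>j k i j'. if cond X Y Z i j j' k then term1 hh tt X Y Z i j j' k else 0"
  have "smul ?s (M1 hh tt X Y Z) = (\<Sum>j<length Y. \<Sum>k<length Z. \<Sum>i<length X. \<Sum>j'<length Y. ?H j k i j')"
    unfolding M1_def smul_sum[of ?s]
  proof (intro sum.cong refl)
    fix j k assume j: "j \<in> {..<length Y}" and k: "k \<in> {..<length Z}"
    show "smul ?s (if Z ! k = dual (Y ! j) then smul (kap (int (nstars Y)) (int (nstars Z)) Y j Z k)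
       (\<Sum>i<length X. \<Sum>p<length (rot Y j).
          Fb hh tt (int (nstars X)) (int (nstars Y) + int (nstars Z) - 1) X (rot Y j @ rot Z k) i p) else 0)
      = (\<Sum>i<length X. \<Sum>j'<length Y. ?H j k i j')"
    proof (cases "Z ! k = dual (Y ! j)")
      case False thus ?thesis by (simp add: cond_def)
    next
      case True
      have lr: "length (rot Y j) = length Y - 1" using j by (simp add: length_rot)
      show ?thesis unfolding if_P[OF True] smul_sum smul_smul lr
      proof (rule sum.cong[OF refl])
        fix i assume i: "i \<in> {..<length X}"
        show "(\<Sum>p<length Y - 1. smul (?s * kap (int (nstars Y)) (int (nstars Z)) Y j Z k)
               (Fb hh tt (int (nstars X)) (int (nstars Y) + int (nstars Z) - 1) X (rot Y j @ rot Z k) i p))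
             = (\<Sum>j'<length Y. ?H j k i j')"
          unfolding reidx[OF j[simplified]]
        proof (rule sum.cong[OF refl])
          fix j' assume j': "j' \<in> {..<length Y}"
          show "(if j' \<noteq> j then smul (?s * kap (int (nstars Y)) (int (nstars Z)) Y j Z k)
               (Fb hh tt (int (nstars X)) (int (nstars Y) + int (nstars Z) - 1) X (rot Y j @ rot Z k) i (bwd (length Y) j j')) else 0)
              = ?H j k i j'"
          proof (cases "j' = j")
            case False
            have lt: "bwd (length Y) j j' < length (rot Y j)"
              using bwd_bij[of j "length Y"] j j' False lr by (auto simp: bij_betw_def)
            have nth: "(rot Y j @ rot Z k) ! bwd (length Y) j j' = Y ! j'"
              using lt rot_nth_bwd[of j Y j'] j j' False by (simp add: nth_append)
            show ?thesis using False True
              by (simp add: Fb_def nth cond_def term1_def Let_def smul_smul mult.assoc)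
          qed (simp add: cond_def)
        qed
      qed
    qed
  qed
  also have "\<dots> = (\<Sum>j<length Y. \<Sum>i<length X. \<Sum>k<length Z. \<Sum>j'<length Y. ?H j k i j')"
    by (rule sum.cong[OF refl]) (rule sum.swap)
  also have "\<dots> = (\<Sum>i<length X. \<Sum>j<length Y. \<Sum>k<length Z. \<Sum>j'<length Y. ?H j k i j')"
    by (rule sum.swap)
  also have "\<dots> = (\<Sum>i<length X. \<Sum>j<length Y. \<Sum>j'<length Y. \<Sum>k<length Z. ?H j k i j')"
    by (rule sum.cong[OF refl], rule sum.cong[OF refl]) (rule sum.swap)
  finally show ?thesis .
qed

lemma L2: "smul (sgnc ((int (nstars Z) - 1) * (int (nstars Y) - 1))) (M2 hh tt Z X Y)
   = (\<Sum>i<length X. \<Sum>j<length Y. \<Sum>j'<length Y. \<Sum>k<length Z.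
        if cond X Y Z i j j' k then term2 hh tt X Y Z i j j' k else 0)"
proof -
  let ?s = "sgnc ((int (nstars Z) - 1) * (int (nstars Y) - 1))"
  let ?H = "\<lambda>i j' k j. if cond X Y Z i j j' k then term2 hh tt X Y Z i j j' k else 0"
  have "smul ?s (M2 hh tt Z X Y) = (\<Sum>i<length X. \<Sum>j'<length Y. \<Sum>k<length Z. \<Sum>j<length Y. ?H i j' k j)"
    unfolding M2_def smul_sum[of ?s]
  proof (intro sum.cong refl)
    fix i j' assume i: "i \<in> {..<length X}" and j': "j' \<in> {..<length Y}"
    show "smul ?s (if Y ! j' = dual (X ! i) then smul (kap (int (nstars X)) (int (nstars Y)) X i Y j')
       (\<Sum>k<length Z. \<Sum>q<length (rot Y j').
          Fb hh tt (int (nstars Z)) (int (nstars X) + int (nstars Y) - 1) Z (rot X i @ rot Y j') k (length (rot X i) + q)) else 0)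
      = (\<Sum>k<length Z. \<Sum>j<length Y. ?H i j' k j)"
    proof (cases "Y ! j' = dual (X ! i)")
      case False thus ?thesis by (simp add: cond_def)
    next
      case True
      have lr: "length (rot Y j') = length Y - 1" using j' by (simp add: length_rot)
      show ?thesis unfolding if_P[OF True] smul_sum smul_smul lr
      proof (rule sum.cong[OF refl])
        fix k assume k: "k \<in> {..<length Z}"
        show "(\<Sum>q<length Y - 1. smul (?s * kap (int (nstars X)) (int (nstars Y)) X i Y j')
               (Fb hh tt (int (nstars Z)) (int (nstars X) + int (nstars Y) - 1) Z (rot X i @ rot Y j') k (length (rot X i) + q)))
             = (\<Sum>j<length Y. ?H i j' k j)"
          unfolding reidx[OF j'[simplified]]
        proof (rule sum.cong[OF refl])
          fix j assume j: "j \<in> {..<length Y}"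
          show "(if j \<noteq> j' then smul (?s * kap (int (nstars X)) (int (nstars Y)) X i Y j')
               (Fb hh tt (int (nstars Z)) (int (nstars X) + int (nstars Y) - 1) Z (rot X i @ rot Y j') k (length (rot X i) + bwd (length Y) j' j)) else 0)
              = ?H i j' k j"
          proof (cases "j = j'")
            case False
            have nth: "(rot X i @ rot Y j') ! (length (rot X i) + bwd (length Y) j' j) = Y ! j"
              using rot_nth_bwd[of j' Y j] j j' False by (simp add: nth_append)
            have nth2: "rot Y j' ! bwd (length Y) j' j = Y ! j"
              using rot_nth_bwd[of j' Y j] j j' False by simp
            show ?thesis using False True
              by (auto simp: Fb_def nth nth2 cond_def term2_def Let_def smul_smul mult.assoc dual_eq_iff)
          qed (simp add: cond_def)
        qed
      qed
    qed
  qed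
  also have "\<dots> = (\<Sum>i<length X. \<Sum>j'<length Y. \<Sum>j<length Y. \<Sum>k<length Z. ?H i j' k j)"
    by (rule sum.cong[OF refl], rule sum.cong[OF refl]) (rule sum.swap)
  also have "\<dots> = (\<Sum>i<length X. \<Sum>j<length Y. \<Sum>j'<length Y. \<Sum>k<length Z. ?H i j' k j)"
    by (rule sum.cong[OF refl]) (rule sum.swap)
  finally show ?thesis .
qed



lemma Gpair: assumes wX: "walk hh tt vx vx X" and wY: "walk hh tt vy vy Y" and wZ: "walk hh tt vz vz Z"
    and aX: "arrs Q X" and aY: "arrs Q Y" and aZ: "arrs Q Z"
  shows "smul (sgnc ((int (nstars X) - 1) * (int (nstars Z) - 1))) (M1 hh tt X Y Z)
       + smul (sgnc ((int (nstars Z) - 1) * (int (nstars Y) - 1))) (M2 hh tt Z X Y) \<in> relspan I Q hh tt"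
  unfolding L1 L2 sum.distrib[symmetric]
proof (intro rs_sum)
  fix i j j' k assume i: "i \<in> {..<length X}" and j: "j \<in> {..<length Y}" and j': "j' \<in> {..<length Y}"
    and k: "k \<in> {..<length Z}"
  show "(if cond X Y Z i j j' k then term1 hh tt X Y Z i j j' k else 0) +
        (if cond X Y Z i j j' k then term2 hh tt X Y Z i j j' k else 0) \<in> relspan I Q hh tt"
  proof (cases "cond X Y Z i j j' k")
    case True
    hence "j \<noteq> j'" "Y ! j' = dual (X ! i)" "Z ! k = dual (Y ! j)" by (auto simp: cond_def)
    from pair[OF wX wY wZ aX aY aZ _ _ _ this(1) _ this(2,3)] i j j' k True show ?thesis by simp
  qed simp
qed

lemma Jcyc: assumes wX: "walk hh tt vx vx X" and wY: "walk hh tt vy vy Y" and wZ: "walk hh tt vz vz Z"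
    and aX: "arrs Q X" and aY: "arrs Q Y" and aZ: "arrs Q Z" and fQ: "finite Q"
  shows "smul (sgnc ((int (nstars X) - 1) * (int (nstars Z) - 1)))
           (schouten Q hh tt (int (nstars X)) (int (nstars Y) + int (nstars Z) - 1) (basis (mkp vx X))
              (schouten Q hh tt (int (nstars Y)) (int (nstars Z)) (basis (mkp vy Y)) (basis (mkp vz Z))))
       + smul (sgnc ((int (nstars Y) - 1) * (int (nstars X) - 1)))
           (schouten Q hh tt (int (nstars Y)) (int (nstars Z) + int (nstars X) - 1) (basis (mkp vy Y))
              (schouten Q hh tt (int (nstars Z)) (int (nstars X)) (basis (mkp vz Z)) (basis (mkp vx X))))
       + smul (sgnc ((int (nstars Z) - 1) * (int (nstars Y) - 1)))
           (schouten Q hh tt (int (nstars Z)) (int (nstars X) + int (nstars Y) - 1) (basis (mkp vz Z))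
              (schouten Q hh tt (int (nstars X)) (int (nstars Y)) (basis (mkp vx X)) (basis (mkp vy Y))))
     \<in> relspan I Q hh tt"
  (is "smul ?a ?A + smul ?b ?B + smul ?c ?C \<in> _")
proof -
  have n1: "?A - Mb hh tt X Y Z \<in> relspan I Q hh tt" by (rule nest[OF wX wY wZ aX aY aZ fQ])
  have n2: "?B - Mb hh tt Y Z X \<in> relspan I Q hh tt" by (rule nest[OF wY wZ wX aY aZ aX fQ])
  have n3: "?C - Mb hh tt Z X Y \<in> relspan I Q hh tt" by (rule nest[OF wZ wX wY aZ aX aY fQ])
  have g1: "smul ?a (M1 hh tt X Y Z) + smul ?c (M2 hh tt Z X Y) \<in> relspan I Q hh tt"
    by (rule Gpair[OF wX wY wZ aX aY aZ])
  have g2: "smul ?b (M1 hh tt Y Z X) + smul ?a (M2 hh tt X Y Z) \<in> relspan I Q hh tt"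
    using Gpair[OF wY wZ wX aY aZ aX] by (simp add: mult.commute)
  have g3: "smul ?c (M1 hh tt Z X Y) + smul ?b (M2 hh tt Y Z X) \<in> relspan I Q hh tt"
    using Gpair[OF wZ wX wY aZ aX aY] by (simp add: mult.commute)
  have "smul ?a ?A + smul ?b ?B + smul ?c ?C
     = (smul ?a (?A - Mb hh tt X Y Z) + smul ?b (?B - Mb hh tt Y Z X) + smul ?c (?C - Mb hh tt Z X Y))
       + ((smul ?a (M1 hh tt X Y Z) + smul ?c (M2 hh tt Z X Y)) + (smul ?b (M1 hh tt Y Z X) + smul ?a (M2 hh tt X Y Z))
          + (smul ?c (M1 hh tt Z X Y) + smul ?b (M2 hh tt Y Z X)))"
    by (simp add: Mb_split smul_diff smul_add algebra_simps)
  also have "\<dots> \<in> relspan I Q hh tt"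
    by (intro rs_add rs_smul n1 n2 n3 g1 g2 g3)
  finally show ?thesis .
qed



definition Jf where
  "Jf Q hh tt r s t A B C =
     smul (sgnc ((int r - 1) * (int t - 1))) (schouten Q hh tt (int r) (int s + int t - 1) A (schouten Q hh tt (int s) (int t) B C))
   + smul (sgnc ((int s - 1) * (int r - 1))) (schouten Q hh tt (int s) (int t + int r - 1) B (schouten Q hh tt (int t) (int r) C A))
   + smul (sgnc ((int t - 1) * (int s - 1))) (schouten Q hh tt (int t) (int r + int s - 1) C (schouten Q hh tt (int r) (int s) A B))"

lemma Jf_cyc: "Jf Q hh tt r s t A B C = Jf Q hh tt s t r B C A"
  unfolding Jf_def by (simp add: algebra_simps)

lemma schouten_lin_left: assumes "finite S" "\<And>p. fs (f p)" "fs h"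
  shows "schouten Q hh tt r s (\<Sum>p\<in>S. smul (c p) (f p)) h = (\<Sum>p\<in>S. smul (c p) (schouten Q hh tt r s (f p) h))"
  using assms by (simp add: schouten_sum_left schouten_smul_left)

lemma schouten_lin_right: assumes "finite S" "\<And>p. fs (f p)" "fs h"
  shows "schouten Q hh tt r s h (\<Sum>p\<in>S. smul (c p) (f p)) = (\<Sum>p\<in>S. smul (c p) (schouten Q hh tt r s h (f p)))"
  using assms by (simp add: schouten_sum_right schouten_smul_right)

lemma Jf_lin: assumes "finite S" "\<And>p. fs (f p)" "fs B" "fs C"
  shows "Jf Q hh tt r s t (\<Sum>p\<in>S. smul (c p) (f p)) B C = (\<Sum>p\<in>S. smul (c p) (Jf Q hh tt r s t (f p) B C))"
proof -
  have a: "schouten Q hh tt (int t) (int r) C (\<Sum>p\<in>S. smul (c p) (f p)) = (\<Sum>p\<in>S. smul (c p) (schouten Q hh tt (int t) (int r) C (f p)))"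
    by (rule schouten_lin_right[OF assms(1,2,4)])
  have b: "schouten Q hh tt (int r) (int s) (\<Sum>p\<in>S. smul (c p) (f p)) B = (\<Sum>p\<in>S. smul (c p) (schouten Q hh tt (int r) (int s) (f p) B))"
    by (rule schouten_lin_left[OF assms(1,2,3)])
  show ?thesis unfolding Jf_def a b
    using assms by (simp add: schouten_lin_left schouten_lin_right smul_sum smul_smul smul_add sum.distrib mult.commute)
qed

lemma schouten_Dz_left: "(\<And>w. Dw hh tt w f = 0) \<Longrightarrow> schouten Q hh tt r s f g = 0"
  by (simp add: schouten_eq)
lemma schouten_Dz_right: "(\<And>w. Dw hh tt w f = 0) \<Longrightarrow> schouten Q hh tt r s g f = 0"
  by (simp add: schouten_eq)

definition good where
  "good I Q hh tt p \<longleftrightarrow> (\<exists>v X. p = mkp v X \<and> walk hh tt v v X \<and> arrs Q X \<and> nstars X = path_stars p)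
     \<or> (\<forall>w. Dw hh tt w (basis p) = 0)"

lemma walk_of_valid: "(\<forall>k. Suc k < length xs \<longrightarrow> dt hh tt (xs ! k) = dh hh tt (xs ! Suc k)) \<Longrightarrow> xs \<noteq> []
   \<Longrightarrow> walk hh tt (dh hh tt (hd xs)) (dt hh tt (last xs)) xs"
proof (induct xs)
  case Nil thus ?case by simp
next
  case (Cons x xs)
  show ?case
  proof (cases xs)
    case Nil thus ?thesis by simp
  next
    case (Cons y ys)
    have "\<forall>k. Suc k < length xs \<longrightarrow> dt hh tt (xs ! k) = dh hh tt (xs ! Suc k)"
      using Cons.prems(1) by (metis Suc_less_eq length_Cons nth_Cons_Suc)
    hence "walk hh tt (dh hh tt (hd xs)) (dt hh tt (last xs)) xs" using Cons.hyps Cons by simp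
    moreover have "dt hh tt x = dh hh tt (hd xs)" using Cons.prems(1) Cons by (metis hd_conv_nth length_Cons list.distinct(1) nth_Cons_0 nth_Cons_Suc zero_less_Suc Suc_less_eq length_greater_0_conv)
    ultimately show ?thesis using Cons by simp
  qed
qed

lemma valid_good: assumes "valid_path I Q hh tt p" "\<forall>a\<in>Q. hh a \<in> I \<and> tt a \<in> I"
  shows "good I Q hh tt p"
proof (cases p)
  case (Triv i)
  have "p = mkp i [] \<and> walk hh tt i i [] \<and> arrs Q [] \<and> nstars [] = path_stars p"
    using Triv by (simp add: mkp_def arrs_def)
  thus ?thesis unfolding good_def by blast
next
  case (Arr xs)
  have ne: "xs \<noteq> []" and aQ: "arrs Q xs" and ch: "\<forall>k. Suc k < length xs \<longrightarrow> dt hh tt (xs ! k) = dh hh tt (xs ! Suc k)"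
    using assms(1) Arr by (auto simp: arrs_def)
  have w: "walk hh tt (dh hh tt (hd xs)) (dt hh tt (last xs)) xs" by (rule walk_of_valid[OF ch ne])
  show ?thesis
  proof (cases "qclosed hh tt xs")
    case True
    hence "walk hh tt (dh hh tt (hd xs)) (dh hh tt (hd xs)) xs" using w by (simp add: qclosed_def)
    hence "p = mkp (dh hh tt (hd xs)) xs \<and> walk hh tt (dh hh tt (hd xs)) (dh hh tt (hd xs)) xs \<and> arrs Q xs \<and> nstars xs = path_stars p"
      using Arr ne aQ by (simp add: mkp_def)
    thus ?thesis unfolding good_def by blast
  next
    case False
    hence "\<forall>w. Dw hh tt w (basis p) = 0" using Arr by (simp add: Dw_basis Dpath_nc)
    thus ?thesis unfolding good_def by blast
  qed
qed

lemma Jf_basis: assumes "good I Q hh tt p1" "good I Q hh tt p2" "good I Q hh tt p3" "finite Q"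
  shows "Jf Q hh tt (path_stars p1) (path_stars p2) (path_stars p3) (basis p1) (basis p2) (basis p3) \<in> relspan I Q hh tt"
proof -
  let ?J = "Jf Q hh tt (path_stars p1) (path_stars p2) (path_stars p3) (basis p1) (basis p2) (basis p3)"
  show ?thesis
  proof (cases "(\<forall>w. Dw hh tt w (basis p1) = 0) \<or> (\<forall>w. Dw hh tt w (basis p2) = 0) \<or> (\<forall>w. Dw hh tt w (basis p3) = 0)")
    case True
    hence "?J = 0" unfolding Jf_def
      by (elim disjE) (simp_all add: schouten_Dz_left schouten_Dz_right)
    thus ?thesis by simp
  next
    case False
    then obtain v1 X1 v2 X2 v3 X3 where
      g1: "p1 = mkp v1 X1" "walk hh tt v1 v1 X1" "arrs Q X1" "nstars X1 = path_stars p1" and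
      g2: "p2 = mkp v2 X2" "walk hh tt v2 v2 X2" "arrs Q X2" "nstars X2 = path_stars p2" and
      g3: "p3 = mkp v3 X3" "walk hh tt v3 v3 X3" "arrs Q X3" "nstars X3 = path_stars p3"
      using assms(1,2,3) unfolding good_def by blast
    have "?J = Jf Q hh tt (nstars X1) (nstars X2) (nstars X3) (basis (mkp v1 X1)) (basis (mkp v2 X2)) (basis (mkp v3 X3))"
      using g1 g2 g3 by simp
    also have "\<dots> \<in> relspan I Q hh tt"
      unfolding Jf_def using Jcyc[OF g1(2) g2(2) g3(2) g1(3) g2(3) g3(3) assms(4)] by (simp add: add.commute)
    finally show ?thesis .
  qed
qed



lemma Jf_main: assumes fQ: "finite Q" and hQ: "\<forall>a\<in>Q. hh a \<in> I \<and> tt a \<in> I"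
    and gA: "A \<in> graded I Q hh tt r" and gB: "B \<in> graded I Q hh tt s" and gC: "C \<in> graded I Q hh tt t"
  shows "Jf Q hh tt r s t A B C \<in> relspan I Q hh tt"
proof -
  have fA: "fs A" and fB: "fs B" and fC: "fs C" using gA gB gC by (auto intro: graded_fs)
  have gd: "good I Q hh tt p \<and> path_stars p = d" if "P \<in> graded I Q hh tt d" "p \<in> supp P" for P d p
    using graded_supp[OF that] valid_good[OF _ hQ] by blast
  have "Jf Q hh tt r s t A B C = Jf Q hh tt r s t (\<Sum>p\<in>supp A. smul (A p) (basis p)) B C"
    using expand_basis[OF fA] by (rule arg_cong[where f="\<lambda>x. Jf Q hh tt r s t x B C"])
  also have "\<dots> = (\<Sum>p1\<in>supp A. smul (A p1) (Jf Q hh tt r s t (basis p1) B C))"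
    by (rule Jf_lin) (use fA fB fC in auto)
  also have "\<dots> \<in> relspan I Q hh tt"
  proof (intro rs_sum rs_smul)
    fix p1 assume p1: "p1 \<in> supp A"
    have "Jf Q hh tt r s t (basis p1) B C = Jf Q hh tt s t r B C (basis p1)" by (rule Jf_cyc)
    also have "\<dots> = Jf Q hh tt s t r (\<Sum>p\<in>supp B. smul (B p) (basis p)) C (basis p1)"
      using expand_basis[OF fB] by (rule arg_cong[where f="\<lambda>x. Jf Q hh tt s t r x C (basis p1)"])
    also have "\<dots> = (\<Sum>p2\<in>supp B. smul (B p2) (Jf Q hh tt s t r (basis p2) C (basis p1)))"
      by (rule Jf_lin) (use fB fC in auto)
    also have "\<dots> \<in> relspan I Q hh tt"
    proof (intro rs_sum rs_smul)
      fix p2 assume p2: "p2 \<in> supp B"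
      have "Jf Q hh tt s t r (basis p2) C (basis p1) = Jf Q hh tt t r s C (basis p1) (basis p2)" by (rule Jf_cyc)
      also have "\<dots> = Jf Q hh tt t r s (\<Sum>p\<in>supp C. smul (C p) (basis p)) (basis p1) (basis p2)"
        using expand_basis[OF fC] by (rule arg_cong[where f="\<lambda>x. Jf Q hh tt t r s x (basis p1) (basis p2)"])
      also have "\<dots> = (\<Sum>p3\<in>supp C. smul (C p3) (Jf Q hh tt t r s (basis p3) (basis p1) (basis p2)))"
        by (rule Jf_lin) (use fC in auto)
      also have "\<dots> \<in> relspan I Q hh tt"
      proof (intro rs_sum rs_smul)
        fix p3 assume p3: "p3 \<in> supp C"
        have g1: "good I Q hh tt p1" "path_stars p1 = r" using gd[OF gA p1] by auto
        have g2: "good I Q hh tt p2" "path_stars p2 = s" using gd[OF gB p2] by auto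
        have g3: "good I Q hh tt p3" "path_stars p3 = t" using gd[OF gC p3] by auto
        have "Jf Q hh tt t r s (basis p3) (basis p1) (basis p2) = Jf Q hh tt r s t (basis p1) (basis p2) (basis p3)"
          by (metis Jf_cyc)
        also have "\<dots> \<in> relspan I Q hh tt" using Jf_basis[OF g1(1) g2(1) g3(1) fQ] g1(2) g2(2) g3(2) by simp
        finally show "Jf Q hh tt t r s (basis p3) (basis p1) (basis p2) \<in> relspan I Q hh tt" .
      qed
      finally show "Jf Q hh tt s t r (basis p2) C (basis p1) \<in> relspan I Q hh tt" .
    qed
    finally show "Jf Q hh tt r s t (basis p1) B C \<in> relspan I Q hh tt" .
  qed
  finally show ?thesis .
qed

theorem mainTheorem1:
  fixes I :: "'v set" and Q :: "'a set" and hh tt :: "'a \<Rightarrow> 'v"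
    and A B C :: "('v,'a) elt" and r s t :: nat
  assumes "finite I" and "finite Q" and "\<forall>a\<in>Q. hh a \<in> I \<and> tt a \<in> I"
    and "A \<in> graded I Q hh tt r" and "B \<in> graded I Q hh tt s" and "C \<in> graded I Q hh tt t"
  shows "((\<lambda>q. schouten Q hh tt (int r) (int s) A B q
              - (- sgnc ((int r - 1) * (int s - 1)) * schouten Q hh tt (int s) (int r) B A q))
           \<in> relspan I Q hh tt)
     \<and> ((\<lambda>q. sgnc ((int r - 1) * (int t - 1)) *
               schouten Q hh tt (int r) (int s + int t - 1) A (schouten Q hh tt (int s) (int t) B C) q
            + sgnc ((int s - 1) * (int r - 1)) *
               schouten Q hh tt (int s) (int t + int r - 1) B (schouten Q hh tt (int t) (int r) C A) q
            + sgnc ((int t - 1) * (int s - 1)) *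
               schouten Q hh tt (int t) (int r + int s - 1) C (schouten Q hh tt (int r) (int s) A B) q)
           \<in> relspan I Q hh tt)"
proof
  show "(\<lambda>q. schouten Q hh tt (int r) (int s) A B q
              - (- sgnc ((int r - 1) * (int s - 1)) * schouten Q hh tt (int s) (int r) B A q))
           \<in> relspan I Q hh tt"
    unfolding partI by (rule relspan.zero)
next
  have "(\<lambda>q. sgnc ((int r - 1) * (int t - 1)) *
               schouten Q hh tt (int r) (int s + int t - 1) A (schouten Q hh tt (int s) (int t) B C) q
            + sgnc ((int s - 1) * (int r - 1)) *
               schouten Q hh tt (int s) (int t + int r - 1) B (schouten Q hh tt (int t) (int r) C A) q
            + sgnc ((int t - 1) * (int s - 1)) *
               schouten Q hh tt (int t) (int r + int s - 1) C (schouten Q hh tt (int r) (int s) A B) q)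
      = Jf Q hh tt r s t A B C"
    unfolding Jf_def by (simp add: fun_eq_iff)
  thus "(\<lambda>q. sgnc ((int r - 1) * (int t - 1)) *
               schouten Q hh tt (int r) (int s + int t - 1) A (schouten Q hh tt (int s) (int t) B C) q
            + sgnc ((int s - 1) * (int r - 1)) *
               schouten Q hh tt (int s) (int t + int r - 1) B (schouten Q hh tt (int t) (int r) C A) q
            + sgnc ((int t - 1) * (int s - 1)) *
               schouten Q hh tt (int t) (int r + int s - 1) C (schouten Q hh tt (int r) (int s) A B) q)
           \<in> relspan I Q hh tt"
    using Jf_main[OF assms(2,3,4,5,6)] by simp
qed


end
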